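(* Let $n\ge 2$ be a fixed real number, $\nu\ge 0$, and $T>0$. Let $u_1,\omega_1,\psi_1:[0,T)\times[0,\infty)\times\mathbb{R}\to\mathbb{R}$ be smooth functions which, for each $t$, are even in $r$ (i.e. extend to smooth functions of $(r,z)\in\mathbb{R}^2$ that are even in $r$) and which, together with all their derivatives, decay rapidly as $r^2+z^2\to\infty$, uniformly on compact time subintervals. Suppose they satisfy, on $(0,T)\times(0,\infty)\times\mathbb{R}$, $$u_{1,t}+u^r u_{1,r}+u^z u_{1,z}=2u_1\psi_{1,z}+\nu\,\Delta_n u_1,$$ $$\omega_{1,t}+u^r\omega_{1,r}+u^z\omega_{1,z}=(u_1^2)_z-(n-3)\psi_{1,z}\omega_1+\nu\,\Delta_n\omega_1,$$ $$-\Delta_n\psi_1=\omega_1,$$ where $\Delta_n=\partial_r^2+\frac{n}{r}\partial_r+\partial_z^2$, $u^r=-r\psi_{1,z}$ and $u^z=(n-1)\psi_1+r\psi_{1,r}$. Then for all $t\in(0,T)$, $$\frac12\frac{d}{dt}\int_{\mathbb{R}}\int_0^\infty\big(u_1^2+\psi_{1,r}^2+\psi_{1,z}^2\big)\,r^n\,dr\,dz=-\nu\int_{\mathbb{R}}\int_0^\infty\big(u_{1,r}^2+u_{1,z}^2+(\Delta_n\psi_1)^2\big)\,r^n\,dr\,dz .$$ In particular, for $\nu=0$ the quantity $\int\!\!\int(u_1^2+|\nabla\psi_1|^2)r^n\,dr\,dz$ is conserved, and for $\nu>0$ it is non-increasing.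
   Context: This is the "generalized $n$-dimensional axisymmetric Navier--Stokes equations" written in the variables $u_1=u^\theta/r$, $\omega_1=\omega^\theta/r$, $\psi_1=\psi^\theta/r$ (angular velocity, angular vorticity, angular stream function divided by $r$). Equivalently the first equation can be written for the total circulation $\Gamma=r^2u_1$ as $\Gamma_t+u^r\Gamma_r+u^z\Gamma_z=\nu(\Gamma_{rr}+\frac{n-4}{r}\Gamma_r+\frac{6-2n}{r^2}\Gamma+\Gamma_{zz})$. The velocity satisfies $u^r=-(r^{n-1}\psi_1)_z/r^{n-2}$, $u^z=(r^{n-1}\psi_1)_r/r^{n-2}$. Here $\nabla=(\partial_r,\partial_z)$. *)

theory Defs
  imports "HOL-Analysis.Analysis"
begin

fun dirs :: "'a::real_normed_vector list \<Rightarrow> ('a \<Rightarrow> real) \<Rightarrow> 'a \<Rightarrow> real" where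
  "dirs [] f = f"
| "dirs (b # bs) f = (\<lambda>x. frechet_derivative (dirs bs f) (at x) b)"

definition smooth_on :: "'a::euclidean_space set \<Rightarrow> ('a \<Rightarrow> real) \<Rightarrow> bool" where
  "smooth_on S f \<longleftrightarrow> (\<forall>bs. set bs \<subseteq> Basis \<longrightarrow> dirs bs f differentiable_on S)"

definition unc :: "(real \<Rightarrow> real \<Rightarrow> real \<Rightarrow> real) \<Rightarrow> real \<times> real \<times> real \<Rightarrow> real" where
  "unc f = (\<lambda>(t, r, z). f t r z)"

definition rapid_decay :: "real set \<Rightarrow> (real \<Rightarrow> real \<Rightarrow> real \<Rightarrow> real) \<Rightarrow> bool" where
  "rapid_decay I f \<longleftrightarrow>
     (\<forall>bs K (N::nat). set bs \<subseteq> Basis \<longrightarrow> compact K \<longrightarrow> K \<subseteq> I \<longrightarrow>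
        (\<exists>C. \<forall>t\<in>K. \<forall>r z. \<bar>dirs bs (unc f) (t, r, z)\<bar> * (1 + r\<^sup>2 + z\<^sup>2) ^ N \<le> C))"

definition dt :: "(real \<Rightarrow> real \<Rightarrow> real \<Rightarrow> real) \<Rightarrow> real \<Rightarrow> real \<Rightarrow> real \<Rightarrow> real" where
  "dt f t r z = deriv (\<lambda>s. f s r z) t"
definition dr :: "(real \<Rightarrow> real \<Rightarrow> real \<Rightarrow> real) \<Rightarrow> real \<Rightarrow> real \<Rightarrow> real \<Rightarrow> real" where
  "dr f t r z = deriv (\<lambda>s. f t s z) r"
definition dz :: "(real \<Rightarrow> real \<Rightarrow> real \<Rightarrow> real) \<Rightarrow> real \<Rightarrow> real \<Rightarrow> real \<Rightarrow> real" where
  "dz f t r z = deriv (\<lambda>s. f t r s) z"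

definition lapn :: "real \<Rightarrow> (real \<Rightarrow> real \<Rightarrow> real \<Rightarrow> real) \<Rightarrow> real \<Rightarrow> real \<Rightarrow> real \<Rightarrow> real" where
  "lapn n f t r z = dr (dr f) t r z + n / r * dr f t r z + dz (dz f) t r z"

definition wint :: "real \<Rightarrow> (real \<Rightarrow> real \<Rightarrow> real) \<Rightarrow> real" where
  "wint n g = (LINT z|lborel. (LINT r:{0<..}|lborel. g r z * r powr n))"

end

theory Submission
  imports Defs "HOL-Probability.Sinc_Integral"
begin

lemma mvt_bound:
  fixes F F' :: "real \<Rightarrow> real"
  assumes der: "\<And>y. min a b \<le> y \<Longrightarrow> y \<le> max a b \<Longrightarrow> (F has_real_derivative F' y) (at y)"
    and bnd: "\<And>y. min a b \<le> y \<Longrightarrow> y \<le> max a b \<Longrightarrow> \<bar>F' y\<bar> \<le> B"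
  shows "\<bar>F b - F a\<bar> \<le> B * \<bar>b - a\<bar>"
proof (cases a b rule: linorder_cases)
  case less
  then obtain z where z: "a < z" "z < b" "F b - F a = (b - a) * F' z"
    using MVT2[of a b F F'] der by (auto simp: min_def max_def)
  have "\<bar>F' z\<bar> \<le> B" using bnd z less by (auto simp: min_def max_def)
  then show ?thesis using z less by (simp add: abs_mult mult.commute mult_right_mono)
next
  case equal then show ?thesis by simp
next
  case greater
  then obtain z where z: "b < z" "z < a" "F a - F b = (a - b) * F' z"
    using MVT2[of b a F F'] der by (auto simp: min_def max_def)
  have "\<bar>F' z\<bar> \<le> B" using bnd z greater by (auto simp: min_def max_def)
  then show ?thesis using z greater
    by (simp add: abs_mult mult.commute mult_right_mono abs_minus_commute)
qed

lemma leibniz_lebesgue: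
  fixes f f' :: "real \<Rightarrow> 'a \<Rightarrow> real" and g :: "'a \<Rightarrow> real"
  assumes d: "d > 0"
    and int: "\<And>s. s \<in> ball t d \<Longrightarrow> integrable M (f s)"
    and der: "\<And>x s. x \<in> space M \<Longrightarrow> s \<in> ball t d \<Longrightarrow> ((\<lambda>s. f s x) has_real_derivative f' s x) (at s)"
    and gi: "integrable M g"
    and bnd: "\<And>x s. x \<in> space M \<Longrightarrow> s \<in> ball t d \<Longrightarrow> \<bar>f' s x\<bar> \<le> g x"
  shows "((\<lambda>s. \<integral>x. f s x \<partial>M) has_real_derivative (\<integral>x. f' t x \<partial>M)) (at t)"
proof -
  have tb: "t \<in> ball t d" using d by simp
  have qb: "\<bar>f s x - f t x\<bar> \<le> g x * \<bar>s - t\<bar>" if x: "x \<in> space M" and s: "s \<in> ball t d" for x s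
  proof (rule mvt_bound)
    fix y assume "min t s \<le> y" "y \<le> max t s"
    then have "y \<in> ball t d" using s by (auto simp: dist_real_def min_def max_def split: if_splits)
    then show "((\<lambda>s. f s x) has_real_derivative f' y x) (at y)" "\<bar>f' y x\<bar> \<le> g x"
      using der[OF x] bnd[OF x] by auto
  qed
  show ?thesis
    unfolding has_field_derivative_iff tendsto_at_iff_sequentially
  proof (intro allI impI)
    fix X :: "nat \<Rightarrow> real"
    assume X: "\<forall>i. X i \<in> UNIV - {t}" and Xt: "X \<longlonglongrightarrow> t"
    define s where "s i x = (if X i \<in> ball t d then (f (X i) x - f t x) / (X i - t) else 0)" for i x
    have ev: "\<forall>\<^sub>F i in sequentially. X i \<in> ball t d"
      using Xt d unfolding tendsto_iff by (auto simp: dist_commute)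
    have lim: "(\<lambda>i. s i x) \<longlonglongrightarrow> f' t x" if x: "x \<in> space M" for x
    proof -
      have "((\<lambda>y. (f y x - f t x) / (y - t)) \<longlongrightarrow> f' t x) (at t)"
        using der[OF x tb] unfolding has_field_derivative_iff .
      then have "((\<lambda>i. (f (X i) x - f t x) / (X i - t)) \<longlonglongrightarrow> f' t x)"
        using X Xt unfolding tendsto_at_iff_sequentially comp_def by auto
      then show ?thesis
        by (rule Lim_transform_eventually) (use ev in \<open>auto elim!: eventually_mono simp: s_def\<close>)
    qed
    have meas: "s i \<in> borel_measurable M" for i
      using int[of "X i"] int[OF tb] unfolding s_def by (cases "X i \<in> ball t d") auto
    have fm: "f' t \<in> borel_measurable M"
      by (rule borel_measurable_LIMSEQ_real[OF lim meas])
    have bd: "AE x in M. norm (s i x) \<le> g x" for i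
    proof (rule AE_I2)
      fix x assume x: "x \<in> space M"
      have g0: "0 \<le> g x" using bnd[OF x tb] by linarith
      show "norm (s i x) \<le> g x"
      proof (cases "X i \<in> ball t d")
        case True
        have "X i \<noteq> t" using X by auto
        then have "\<bar>(f (X i) x - f t x) / (X i - t)\<bar> \<le> g x"
          using qb[OF x True] by (simp add: abs_divide divide_le_eq)
        then show ?thesis using True by (simp add: s_def)
      qed (simp add: s_def g0)
    qed
    have "(\<lambda>i. integral\<^sup>L M (s i)) \<longlonglongrightarrow> integral\<^sup>L M (f' t)"
      by (rule integral_dominated_convergence[OF fm meas gi AE_I2[OF lim] bd])
    then show "((\<lambda>y. ((\<integral>x. f y x \<partial>M) - (\<integral>x. f t x \<partial>M)) / (y - t)) \<circ> X) \<longlonglongrightarrow> (\<integral>x. f' t x \<partial>M)"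
    proof (rule Lim_transform_eventually)
      show "\<forall>\<^sub>F i in sequentially. integral\<^sup>L M (s i) = ((\<lambda>y. ((\<integral>x. f y x \<partial>M) - (\<integral>x. f t x \<partial>M)) / (y - t)) \<circ> X) i"
        using ev
      proof (rule eventually_mono)
        fix i assume "X i \<in> ball t d"
        then show "integral\<^sup>L M (s i) = ((\<lambda>y. ((\<integral>x. f y x \<partial>M) - (\<integral>x. f t x \<partial>M)) / (y - t)) \<circ> X) i"
        proof -
          have "s i = (\<lambda>x. (f (X i) x - f t x) / (X i - t))"
            using \<open>X i \<in> ball t d\<close> by (simp add: s_def fun_eq_iff)
          then show ?thesis
            using int[OF tb] int[of "X i"] \<open>X i \<in> ball t d\<close> by (simp add: integral_diff)
        qed
      qed
    qed
  qed
qed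

lemma cont_lebesgue:
  fixes f :: "real \<Rightarrow> 'a \<Rightarrow> real" and g :: "'a \<Rightarrow> real"
  assumes d: "d > 0"
    and meas: "\<And>s. s \<in> ball z d \<Longrightarrow> f s \<in> borel_measurable M"
    and cont: "\<And>x. x \<in> space M \<Longrightarrow> isCont (\<lambda>s. f s x) z"
    and gi: "integrable M g"
    and bnd: "\<And>x s. x \<in> space M \<Longrightarrow> s \<in> ball z d \<Longrightarrow> \<bar>f s x\<bar> \<le> g x"
  shows "isCont (\<lambda>s. \<integral>x. f s x \<partial>M) z"
  unfolding isCont_def tendsto_at_iff_sequentially
proof (intro allI impI)
  fix X :: "nat \<Rightarrow> real"
  assume X: "\<forall>i. X i \<in> UNIV - {z}" and Xt: "X \<longlonglongrightarrow> z"
  have zb: "z \<in> ball z d" using d by simp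
  define s where "s i x = (if X i \<in> ball z d then f (X i) x else f z x)" for i x
  have ev: "\<forall>\<^sub>F i in sequentially. X i \<in> ball z d"
    using Xt d unfolding tendsto_iff by (auto simp: dist_commute)
  have lim: "(\<lambda>i. s i x) \<longlonglongrightarrow> f z x" if x: "x \<in> space M" for x
  proof -
    have "(\<lambda>i. f (X i) x) \<longlonglongrightarrow> f z x"
      using cont[OF x] X Xt unfolding isCont_def tendsto_at_iff_sequentially comp_def by auto
    then show ?thesis
      by (rule Lim_transform_eventually) (use ev in \<open>auto elim!: eventually_mono simp: s_def\<close>)
  qed
  have ms: "s i \<in> borel_measurable M" for i
    using meas[of "X i"] meas[OF zb] unfolding s_def by (cases "X i \<in> ball z d") auto
  have bd: "AE x in M. norm (s i x) \<le> g x" for i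
    using bnd zb by (auto simp: s_def)
  have "(\<lambda>i. integral\<^sup>L M (s i)) \<longlonglongrightarrow> integral\<^sup>L M (f z)"
    by (rule integral_dominated_convergence[OF meas[OF zb] ms gi AE_I2[OF lim] bd])
  then show "((\<lambda>s. \<integral>x. f s x \<partial>M) \<circ> X) \<longlonglongrightarrow> (\<integral>x. f z x \<partial>M)"
  proof (rule Lim_transform_eventually)
    show "\<forall>\<^sub>F i in sequentially. integral\<^sup>L M (s i) = ((\<lambda>s. \<integral>x. f s x \<partial>M) \<circ> X) i"
      using ev by eventually_elim (simp add: s_def[abs_def])
  qed
qed

lemma dirs_append: "dirs bs (dirs cs F) = dirs (bs @ cs) F"
  by (induction bs) auto

lemma dirs_single: "dirs [a] g x = frechet_derivative g (at x) a"
  by simp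

lemma dir_deriv:
  fixes g :: "'v::real_normed_vector \<Rightarrow> real"
  assumes "g differentiable (at (p + s *\<^sub>R a))"
  shows "((\<lambda>s. g (p + s *\<^sub>R a)) has_real_derivative dirs [a] g (p + s *\<^sub>R a)) (at s)"
proof -
  let ?D = "frechet_derivative g (at (p + s *\<^sub>R a))"
  have g: "(g has_derivative ?D) (at (p + s *\<^sub>R a))"
    using assms frechet_derivative_works by blast
  have l: "linear ?D" using g has_derivative_linear by blast
  have p: "((\<lambda>s. p + s *\<^sub>R a) has_derivative (\<lambda>h. h *\<^sub>R a)) (at s)"
    by (auto intro!: derivative_eq_intros)
  have "((\<lambda>s. g (p + s *\<^sub>R a)) has_derivative (\<lambda>h. ?D (h *\<^sub>R a))) (at s)"
    using has_derivative_compose[OF p g] by (simp add: o_def)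
  then show ?thesis
    by (rule has_derivative_imp_has_field_derivative) (simp add: linear_scale[OF l])
qed

lemma clairaut:
  fixes g :: "'v::real_normed_vector \<Rightarrow> real"
  assumes S: "open S" "x \<in> S"
    and d0: "\<And>y. y \<in> S \<Longrightarrow> g differentiable (at y)"
    and da: "\<And>y. y \<in> S \<Longrightarrow> dirs [a] g differentiable (at y)"
    and db: "\<And>y. y \<in> S \<Longrightarrow> dirs [b] g differentiable (at y)"
    and cba: "isCont (dirs [b,a] g) x"
    and cab: "isCont (dirs [a,b] g) x"
  shows "dirs [a,b] g x = dirs [b,a] g x"
proof -
  let ?L1 = "dirs [b,a] g x" and ?L2 = "dirs [a,b] g x"
  have "\<bar>?L1 - ?L2\<bar> \<le> 2 * e" if e: "e > 0" for e
  proof -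
    obtain d1 where d1: "d1 > 0" "ball x d1 \<subseteq> S" using S open_contains_ball by blast
    obtain d2 where d2: "d2 > 0" "\<And>y. dist y x < d2 \<Longrightarrow> \<bar>dirs [b,a] g y - ?L1\<bar> < e"
      using cba e unfolding continuous_at_eps_delta by (metis dist_real_def)
    obtain d3 where d3: "d3 > 0" "\<And>y. dist y x < d3 \<Longrightarrow> \<bar>dirs [a,b] g y - ?L2\<bar> < e"
      using cab e unfolding continuous_at_eps_delta by (metis dist_real_def)
    define d where "d = min d1 (min d2 d3)"
    have d: "d > 0" "d \<le> d1" "d \<le> d2" "d \<le> d3" using d1 d2 d3 by (auto simp: d_def)
    define h where "h = d / (2 * (norm a + norm b + 1))"
    have nab: "0 < 2 * (norm a + norm b + 1)" by (smt (verit) norm_ge_zero)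
    have h0: "h > 0" using d nab unfolding h_def by (intro divide_pos_pos)
    have hd: "h * (norm a + norm b) < d"
    proof -
      have "h * (norm a + norm b) < h * (2 * (norm a + norm b + 1))"
        using h0 by (intro mult_strict_left_mono) (auto, smt (verit) norm_ge_zero)
      also have "\<dots> = d" using nab unfolding h_def by simp
      finally show ?thesis .
    qed
    have inb: "dist (x + s *\<^sub>R a + u *\<^sub>R b) x < d"
      if "0 \<le> s" "s \<le> h" "0 \<le> u" "u \<le> h" for s u
    proof -
      have "dist (x + s *\<^sub>R a + u *\<^sub>R b) x = norm (s *\<^sub>R a + u *\<^sub>R b)"
        by (simp add: dist_norm)
      also have "\<dots> \<le> s * norm a + u * norm b"
        using that by (metis abs_of_nonneg norm_scaleR norm_triangle_ineq)
      also have "\<dots> \<le> h * norm a + h * norm b"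
        using that by (intro add_mono mult_right_mono) auto
      also have "\<dots> < d" using hd by (simp add: distrib_left)
      finally show ?thesis .
    qed
    have inS: "x + s *\<^sub>R a + u *\<^sub>R b \<in> S" if "0 \<le> s" "s \<le> h" "0 \<le> u" "u \<le> h" for s u
      using inb[OF that] d d1 by (auto simp: dist_commute subset_iff)
    define Dl where "Dl = g (x + h *\<^sub>R a + h *\<^sub>R b) - g (x + h *\<^sub>R a) - g (x + h *\<^sub>R b) + g x"
    have "\<exists>y. dist y x < d \<and> Dl = h * h * dirs [b,a] g y"
    proof -
      define al where "al s = g (x + h *\<^sub>R b + s *\<^sub>R a) - g (x + s *\<^sub>R a)" for s
      have al': "(al has_real_derivative (dirs [a] g (x + h *\<^sub>R b + s *\<^sub>R a) - dirs [a] g (x + s *\<^sub>R a))) (at s)"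
        if "0 \<le> s" "s \<le> h" for s
        unfolding al_def
        apply (intro DERIV_diff dir_deriv d0)
        using inS[of s h] inS[of s 0] that h0 by (auto simp: algebra_simps)
      obtain xi where xi: "0 < xi" "xi < h"
        "al h - al 0 = (h - 0) * (dirs [a] g (x + h *\<^sub>R b + xi *\<^sub>R a) - dirs [a] g (x + xi *\<^sub>R a))"
        using MVT2[OF h0, of al "\<lambda>s. dirs [a] g (x + h *\<^sub>R b + s *\<^sub>R a) - dirs [a] g (x + s *\<^sub>R a)"] al' by auto
      define be where "be u = dirs [a] g (x + xi *\<^sub>R a + u *\<^sub>R b)" for u
      have be': "(be has_real_derivative dirs [b, a] g (x + xi *\<^sub>R a + u *\<^sub>R b)) (at u)"
        if "0 \<le> u" "u \<le> h" for u
        unfolding be_def using dir_deriv[of "dirs [a] g" "x + xi *\<^sub>R a" u b] da[OF inS[of xi u]] that xi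
        by auto
      obtain eta where eta: "0 < eta" "eta < h"
        "be h - be 0 = (h - 0) * dirs [b, a] g (x + xi *\<^sub>R a + eta *\<^sub>R b)"
        using MVT2[OF h0, of be "\<lambda>u. dirs [b, a] g (x + xi *\<^sub>R a + u *\<^sub>R b)"] be' by auto
      have "Dl = al h - al 0" by (simp add: Dl_def al_def algebra_simps)
      also have "\<dots> = h * (be h - be 0)" using xi(3) by (simp add: be_def algebra_simps)
      also have "\<dots> = h * h * dirs [b, a] g (x + xi *\<^sub>R a + eta *\<^sub>R b)" using eta(3) by simp
      finally show ?thesis using inb[of xi eta] xi eta by auto
    qed
    then obtain y1 where y1: "dist y1 x < d" "Dl = h * h * dirs [b,a] g y1" by blast
    have "\<exists>y. dist y x < d \<and> Dl = h * h * dirs [a,b] g y"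
    proof -
      define al where "al s = g (x + h *\<^sub>R a + s *\<^sub>R b) - g (x + s *\<^sub>R b)" for s
      have al': "(al has_real_derivative (dirs [b] g (x + h *\<^sub>R a + s *\<^sub>R b) - dirs [b] g (x + s *\<^sub>R b))) (at s)"
        if "0 \<le> s" "s \<le> h" for s
        unfolding al_def
        apply (intro DERIV_diff dir_deriv d0)
        using inS[of h s] inS[of 0 s] that h0 by (auto simp: algebra_simps)
      obtain xi where xi: "0 < xi" "xi < h"
        "al h - al 0 = (h - 0) * (dirs [b] g (x + h *\<^sub>R a + xi *\<^sub>R b) - dirs [b] g (x + xi *\<^sub>R b))"
        using MVT2[OF h0, of al "\<lambda>s. dirs [b] g (x + h *\<^sub>R a + s *\<^sub>R b) - dirs [b] g (x + s *\<^sub>R b)"] al' by auto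
      define be where "be u = dirs [b] g (x + xi *\<^sub>R b + u *\<^sub>R a)" for u
      have be': "(be has_real_derivative dirs [a, b] g (x + xi *\<^sub>R b + u *\<^sub>R a)) (at u)"
        if "0 \<le> u" "u \<le> h" for u
        unfolding be_def using dir_deriv[of "dirs [b] g" "x + xi *\<^sub>R b" u a] db[OF inS[of u xi]] that xi
        by (auto simp: algebra_simps)
      obtain eta where eta: "0 < eta" "eta < h"
        "be h - be 0 = (h - 0) * dirs [a, b] g (x + xi *\<^sub>R b + eta *\<^sub>R a)"
        using MVT2[OF h0, of be "\<lambda>u. dirs [a, b] g (x + xi *\<^sub>R b + u *\<^sub>R a)"] be' by auto
      have "Dl = al h - al 0" by (simp add: Dl_def al_def algebra_simps)
      also have "\<dots> = h * (be h - be 0)" using xi(3) by (simp add: be_def algebra_simps)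
      also have "\<dots> = h * h * dirs [a, b] g (x + xi *\<^sub>R b + eta *\<^sub>R a)" using eta(3) by simp
      finally show ?thesis using inb[of eta xi] xi eta by (auto simp: algebra_simps)
    qed
    then obtain y2 where y2: "dist y2 x < d" "Dl = h * h * dirs [a,b] g y2" by blast
    have hh: "h * h > 0" using h0 by simp
    have eq: "dirs [b,a] g y1 = dirs [a,b] g y2" using y1 y2 h0 by (simp del: dirs.simps)
    have "\<bar>dirs [b,a] g y1 - ?L1\<bar> < e" using d2(2) y1 d by auto
    moreover have "\<bar>dirs [a,b] g y2 - ?L2\<bar> < e" using d3(2) y2 d by auto
    ultimately show ?thesis using eq by linarith
  qed
  note * = this
  have "\<bar>?L1 - ?L2\<bar> \<le> 0"
  proof (rule field_le_epsilon)
    fix e :: real assume "0 < e"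
    then have "\<bar>?L1 - ?L2\<bar> \<le> 2 * (e / 2)" using *[of "e/2"] by simp
    then show "\<bar>?L1 - ?L2\<bar> \<le> 0 + e" by simp
  qed
  then show ?thesis by simp
qed

definition e1 :: "real \<times> real \<times> real" where "e1 = (1,0,0)"
definition e2 :: "real \<times> real \<times> real" where "e2 = (0,1,0)"
definition e3 :: "real \<times> real \<times> real" where "e3 = (0,0,1)"

lemma eB: "e1 \<in> Basis" "e2 \<in> Basis" "e3 \<in> Basis"
  by (auto simp: e1_def e2_def e3_def Basis_prod_def zero_prod_def)

definition SS :: "real \<Rightarrow> (real \<times> real \<times> real) set" where
  "SS T = {0<..<T} \<times> UNIV \<times> UNIV"

lemma open_SS: "open (SS T)"
  unfolding SS_def by (intro open_Times) auto

lemma SS_iff[simp]: "(t, r, z) \<in> SS T \<longleftrightarrow> 0 < t \<and> t < T"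
  by (auto simp: SS_def)

lemma sm_diff:
  assumes "smooth_on (SS T) F" "set bs \<subseteq> Basis" "y \<in> SS T"
  shows "dirs bs F differentiable (at y)"
proof -
  have "dirs bs F differentiable_on SS T" using assms unfolding smooth_on_def by blast
  then show ?thesis using assms(3) open_SS
    by (simp add: differentiable_on_eq_differentiable_at)
qed

lemma sm_cont:
  assumes "smooth_on (SS T) F" "set bs \<subseteq> Basis"
  shows "continuous_on (SS T) (dirs bs F)"
  using assms unfolding smooth_on_def by (blast intro: differentiable_imp_continuous_on)

lemma sm_isCont:
  assumes "smooth_on (SS T) F" "set bs \<subseteq> Basis" "y \<in> SS T"
  shows "isCont (dirs bs F) y"
  using sm_diff[OF assms] differentiable_imp_continuous_within by blast

lemma sm_smooth_dirs:
  assumes "smooth_on (SS T) F" "set cs \<subseteq> Basis"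
  shows "smooth_on (SS T) (dirs cs F)"
  using assms unfolding smooth_on_def dirs_append by auto

lemma slice_t:
  assumes "smooth_on (SS T) F" "set bs \<subseteq> Basis" "0 < t" "t < T"
  shows "((\<lambda>s. dirs bs F (s, r, z)) has_real_derivative dirs (e1 # bs) F (t, r, z)) (at t)"
proof -
  have "dirs bs F differentiable (at ((0, r, z) + t *\<^sub>R e1))"
    using sm_diff[OF assms(1,2), of "(t,r,z)"] assms by (simp add: e1_def)
  from dir_deriv[OF this] show ?thesis by (simp add: e1_def)
qed

lemma slice_r:
  assumes "smooth_on (SS T) F" "set bs \<subseteq> Basis" "0 < t" "t < T"
  shows "((\<lambda>s. dirs bs F (t, s, z)) has_real_derivative dirs (e2 # bs) F (t, r, z)) (at r)"
proof -
  have "dirs bs F differentiable (at ((t, 0, z) + r *\<^sub>R e2))"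
    using sm_diff[OF assms(1,2), of "(t,r,z)"] assms by (simp add: e2_def)
  from dir_deriv[OF this] show ?thesis by (simp add: e2_def)
qed

lemma slice_z:
  assumes "smooth_on (SS T) F" "set bs \<subseteq> Basis" "0 < t" "t < T"
  shows "((\<lambda>s. dirs bs F (t, r, s)) has_real_derivative dirs (e3 # bs) F (t, r, z)) (at z)"
proof -
  have "dirs bs F differentiable (at ((t, r, 0) + z *\<^sub>R e3))"
    using sm_diff[OF assms(1,2), of "(t,r,z)"] assms by (simp add: e3_def)
  from dir_deriv[OF this] show ?thesis by (simp add: e3_def)
qed

lemma unc_app[simp]: "unc f (t, r, z) = f t r z"
  by (simp add: unc_def)

lemma dirs_Nil_unc: "dirs [] (unc f) (t, r, z) = f t r z"
  by simp

context
  fixes T :: real and f :: "real \<Rightarrow> real \<Rightarrow> real \<Rightarrow> real"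
  assumes sm: "smooth_on (SS T) (unc f)"
begin

lemma dr_eq: "0 < t \<Longrightarrow> t < T \<Longrightarrow> dr f t r z = dirs [e2] (unc f) (t, r, z)"
  unfolding dr_def using slice_r[OF sm, where bs="[]" and t=t and r=r and z=z] by (simp add: DERIV_imp_deriv)

lemma dz_eq: "0 < t \<Longrightarrow> t < T \<Longrightarrow> dz f t r z = dirs [e3] (unc f) (t, r, z)"
  unfolding dz_def using slice_z[OF sm, where bs="[]" and t=t and r=r and z=z] by (simp add: DERIV_imp_deriv)

lemma dt_eq: "0 < t \<Longrightarrow> t < T \<Longrightarrow> dt f t r z = dirs [e1] (unc f) (t, r, z)"
  unfolding dt_def using slice_t[OF sm, where bs="[]" and t=t and r=r and z=z] by (simp add: DERIV_imp_deriv)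

lemma drr_eq: "0 < t \<Longrightarrow> t < T \<Longrightarrow> dr (dr f) t r z = dirs [e2, e2] (unc f) (t, r, z)"
proof -
  assume t: "0 < t" "t < T"
  have "(\<lambda>s. dr f t s z) = (\<lambda>s. dirs [e2] (unc f) (t, s, z))" using dr_eq t by auto
  then show ?thesis
    unfolding dr_def[of "dr f"] using slice_r[OF sm, where bs="[e2]" and t=t and r=r and z=z] t eB
    by (simp add: DERIV_imp_deriv)
qed

lemma dzz_eq: "0 < t \<Longrightarrow> t < T \<Longrightarrow> dz (dz f) t r z = dirs [e3, e3] (unc f) (t, r, z)"
proof -
  assume t: "0 < t" "t < T"
  have "(\<lambda>s. dz f t r s) = (\<lambda>s. dirs [e3] (unc f) (t, r, s))" using dz_eq t by auto
  then show ?thesis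
    unfolding dz_def[of "dz f"] using slice_z[OF sm, where bs="[e3]" and t=t and r=r and z=z] t eB
    by (simp add: DERIV_imp_deriv)
qed

lemma lapn_eq: "0 < t \<Longrightarrow> t < T \<Longrightarrow> lapn n f t r z =
   dirs [e2, e2] (unc f) (t, r, z) + n / r * dirs [e2] (unc f) (t, r, z) + dirs [e3, e3] (unc f) (t, r, z)"
  unfolding lapn_def using drr_eq dr_eq dzz_eq by simp

lemma dzsq_eq: "0 < t \<Longrightarrow> t < T \<Longrightarrow> dz (\<lambda>t r z. (f t r z)\<^sup>2) t r z
   = 2 * f t r z * dirs [e3] (unc f) (t, r, z)"
proof -
  assume t: "0 < t" "t < T"
  have "((\<lambda>s. (f t r s)\<^sup>2) has_real_derivative 2 * f t r z * dirs [e3] (unc f) (t, r, z)) (at z)"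
    using slice_z[OF sm, where bs="[]" and t=t and r=r and z=z] t
    by (auto intro!: derivative_eq_intros)
  then show ?thesis unfolding dz_def by (simp add: DERIV_imp_deriv)
qed

end

definition Sp :: "real \<Rightarrow> (real \<times> real \<times> real) set" where
  "Sp T = {0<..<T} \<times> {0<..} \<times> UNIV"

lemma open_Sp: "open (Sp T)"
  unfolding Sp_def by (intro open_Times) auto

lemma Sp_iff[simp]: "(t, r, z) \<in> Sp T \<longleftrightarrow> 0 < t \<and> t < T \<and> 0 < r"
  by (auto simp: Sp_def)

lemma Sp_SS: "Sp T \<subseteq> SS T"
  by (auto simp: Sp_def SS_def)

definition good :: "real \<Rightarrow> (real \<times> real \<times> real \<Rightarrow> real) \<Rightarrow> bool" where
  "good T H \<longleftrightarrow> continuous_on (Sp T) H \<and>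
     (\<forall>K. compact K \<longrightarrow> K \<subseteq> {0<..<T} \<longrightarrow>
        (\<forall>N::nat. \<exists>C. \<forall>t\<in>K. \<forall>r>0. \<forall>z. \<bar>H (t, r, z)\<bar> * (1 + r\<^sup>2 + z\<^sup>2) ^ N \<le> C))"

definition pb :: "real \<Rightarrow> (real \<times> real \<times> real \<Rightarrow> real) \<Rightarrow> bool" where
  "pb T H \<longleftrightarrow> continuous_on (Sp T) H \<and>
     (\<forall>K. compact K \<longrightarrow> K \<subseteq> {0<..<T} \<longrightarrow>
        (\<exists>C (k::nat). \<forall>t\<in>K. \<forall>r>0. \<forall>z. \<bar>H (t, r, z)\<bar> \<le> C * (1 + r\<^sup>2 + z\<^sup>2) ^ k))"

lemma wpos: "0 < 1 + r\<^sup>2 + (z::real)\<^sup>2"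
  by (simp add: add_pos_nonneg)

lemma good_pb: "good T H \<Longrightarrow> pb T H"
  unfolding good_def pb_def
  by (metis mult.right_neutral power_0)

lemma good_mult_pb:
  assumes "good T H" "pb T P"
  shows "good T (\<lambda>x. H x * P x)"
  unfolding good_def
proof (intro conjI allI impI)
  show "continuous_on (Sp T) (\<lambda>x. H x * P x)"
    using assms unfolding good_def pb_def by (intro continuous_on_mult) auto
  fix K :: "real set" and N :: nat
  assume K: "compact K" "K \<subseteq> {0<..<T}"
  have "\<exists>C1 k. \<forall>t\<in>K. \<forall>r>0. \<forall>z. \<bar>P (t, r, z)\<bar> \<le> C1 * (1 + r\<^sup>2 + z\<^sup>2) ^ k"
    using assms(2) K unfolding pb_def by simp
  then obtain C1 k where C10: "\<forall>t\<in>K. \<forall>r>0. \<forall>z. \<bar>P (t, r, z)\<bar> \<le> C1 * (1 + r\<^sup>2 + z\<^sup>2) ^ k"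
    by blast
  note C1 = C10[rule_format]
  have "\<exists>C2. \<forall>t\<in>K. \<forall>r>0. \<forall>z. \<bar>H (t, r, z)\<bar> * (1 + r\<^sup>2 + z\<^sup>2) ^ (N + k) \<le> C2"
    using assms(1) K unfolding good_def by simp
  then obtain C2 where C20: "\<forall>t\<in>K. \<forall>r>0. \<forall>z. \<bar>H (t, r, z)\<bar> * (1 + r\<^sup>2 + z\<^sup>2) ^ (N + k) \<le> C2"
    by blast
  note C2 = C20[rule_format]
  show "\<exists>C. \<forall>t\<in>K. \<forall>r>0. \<forall>z. \<bar>H (t, r, z) * P (t, r, z)\<bar> * (1 + r\<^sup>2 + z\<^sup>2) ^ N \<le> C"
  proof (intro exI ballI allI impI)
    fix t r z :: real assume t: "t \<in> K" and r: "0 < r"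
    let ?w = "1 + r\<^sup>2 + z\<^sup>2"
    have w: "0 < ?w" by (rule wpos)
    have "\<bar>H (t, r, z) * P (t, r, z)\<bar> * ?w ^ N = \<bar>H (t, r, z)\<bar> * \<bar>P (t, r, z)\<bar> * ?w ^ N"
      by (simp add: abs_mult)
    also have "\<dots> \<le> \<bar>H (t, r, z)\<bar> * (max C1 0 * ?w ^ k) * ?w ^ N"
    proof -
      have a: "\<bar>P (t, r, z)\<bar> \<le> max C1 0 * ?w ^ k"
        using C1[OF t r, of z] by (smt (verit) mult_right_mono wpos zero_le_power)
      show ?thesis
        by (rule mult_right_mono[OF mult_left_mono[OF a]]) (use w in auto)
    qed
    also have "\<dots> = max C1 0 * (\<bar>H (t, r, z)\<bar> * ?w ^ (N + k))"
      by (simp add: power_add algebra_simps)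
    also have "\<dots> \<le> max C1 0 * C2"
      using C2[OF t r, of z] by (intro mult_left_mono) simp_all
    finally show "\<bar>H (t, r, z) * P (t, r, z)\<bar> * ?w ^ N \<le> max C1 0 * C2" .
  qed
qed

lemma pb_mult_good: "pb T P \<Longrightarrow> good T H \<Longrightarrow> good T (\<lambda>x. P x * H x)"
  using good_mult_pb[of T H P] by (simp add: mult.commute)

lemma good_mult: "good T P \<Longrightarrow> good T H \<Longrightarrow> good T (\<lambda>x. P x * H x)"
  by (simp add: good_mult_pb good_pb)

lemma good_add:
  assumes "good T H" "good T G"
  shows "good T (\<lambda>x. H x + G x)"
  unfolding good_def
proof (intro conjI allI impI)
  show "continuous_on (Sp T) (\<lambda>x. H x + G x)"
    using assms unfolding good_def by (auto intro: continuous_on_add)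
  fix K :: "real set" and N :: nat
  assume K: "compact K" "K \<subseteq> {0<..<T}"
  have "\<exists>C1. \<forall>t\<in>K. \<forall>r>0. \<forall>z. \<bar>H (t, r, z)\<bar> * (1 + r\<^sup>2 + z\<^sup>2) ^ N \<le> C1"
    using assms(1) K unfolding good_def by simp
  then obtain C1 where C10: "\<forall>t\<in>K. \<forall>r>0. \<forall>z. \<bar>H (t, r, z)\<bar> * (1 + r\<^sup>2 + z\<^sup>2) ^ N \<le> C1"
    by blast
  note C1 = C10[rule_format]
  have "\<exists>C2. \<forall>t\<in>K. \<forall>r>0. \<forall>z. \<bar>G (t, r, z)\<bar> * (1 + r\<^sup>2 + z\<^sup>2) ^ N \<le> C2"
    using assms(2) K unfolding good_def by simp
  then obtain C2 where C20: "\<forall>t\<in>K. \<forall>r>0. \<forall>z. \<bar>G (t, r, z)\<bar> * (1 + r\<^sup>2 + z\<^sup>2) ^ N \<le> C2"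
    by blast
  note C2 = C20[rule_format]
  show "\<exists>C. \<forall>t\<in>K. \<forall>r>0. \<forall>z. \<bar>H (t, r, z) + G (t, r, z)\<bar> * (1 + r\<^sup>2 + z\<^sup>2) ^ N \<le> C"
  proof (intro exI ballI allI impI)
    fix t r z :: real assume t: "t \<in> K" and r: "0 < r"
    have w: "0 \<le> (1 + r\<^sup>2 + z\<^sup>2) ^ N" using wpos[of r z] by simp
    have "\<bar>H (t, r, z) + G (t, r, z)\<bar> * (1 + r\<^sup>2 + z\<^sup>2) ^ N
        \<le> (\<bar>H (t, r, z)\<bar> + \<bar>G (t, r, z)\<bar>) * (1 + r\<^sup>2 + z\<^sup>2) ^ N"
      using w by (intro mult_right_mono) auto
    also have "\<dots> \<le> C1 + C2" using C1[OF t r, of z] C2[OF t r, of z] by (simp add: distrib_right)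
    finally show "\<bar>H (t, r, z) + G (t, r, z)\<bar> * (1 + r\<^sup>2 + z\<^sup>2) ^ N \<le> C1 + C2" .
  qed
qed

lemma pb_add:
  assumes "pb T H" "pb T G"
  shows "pb T (\<lambda>x. H x + G x)"
  unfolding pb_def
proof (intro conjI allI impI)
  show "continuous_on (Sp T) (\<lambda>x. H x + G x)"
    using assms unfolding pb_def by (auto intro: continuous_on_add)
  fix K :: "real set"
  assume K: "compact K" "K \<subseteq> {0<..<T}"
  have "\<exists>C1 k1. \<forall>t\<in>K. \<forall>r>0. \<forall>z. \<bar>H (t, r, z)\<bar> \<le> C1 * (1 + r\<^sup>2 + z\<^sup>2) ^ k1"
    using assms(1) K unfolding pb_def by simp
  then obtain C1 k1 where C10: "\<forall>t\<in>K. \<forall>r>0. \<forall>z. \<bar>H (t, r, z)\<bar> \<le> C1 * (1 + r\<^sup>2 + z\<^sup>2) ^ k1"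
    by blast
  note C1 = C10[rule_format]
  have "\<exists>C2 k2. \<forall>t\<in>K. \<forall>r>0. \<forall>z. \<bar>G (t, r, z)\<bar> \<le> C2 * (1 + r\<^sup>2 + z\<^sup>2) ^ k2"
    using assms(2) K unfolding pb_def by simp
  then obtain C2 k2 where C20: "\<forall>t\<in>K. \<forall>r>0. \<forall>z. \<bar>G (t, r, z)\<bar> \<le> C2 * (1 + r\<^sup>2 + z\<^sup>2) ^ k2"
    by blast
  note C2 = C20[rule_format]
  show "\<exists>C k. \<forall>t\<in>K. \<forall>r>0. \<forall>z. \<bar>H (t, r, z) + G (t, r, z)\<bar> \<le> C * (1 + r\<^sup>2 + z\<^sup>2) ^ k"
  proof (intro exI ballI allI impI)
    fix t r z :: real assume t: "t \<in> K" and r: "0 < r"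
    let ?w = "1 + r\<^sup>2 + z\<^sup>2"
    have w1: "1 \<le> ?w" by simp
    have a: "\<bar>H (t, r, z)\<bar> \<le> max C1 0 * ?w ^ (k1 + k2)"
    proof -
      have "\<bar>H (t, r, z)\<bar> \<le> max C1 0 * ?w ^ k1"
        using C1[OF t r, of z] by (smt (verit) mult_right_mono wpos zero_le_power)
      also have "\<dots> \<le> max C1 0 * ?w ^ (k1 + k2)"
        using w1 by (intro mult_left_mono power_increasing) auto
      finally show ?thesis .
    qed
    have b: "\<bar>G (t, r, z)\<bar> \<le> max C2 0 * ?w ^ (k1 + k2)"
    proof -
      have "\<bar>G (t, r, z)\<bar> \<le> max C2 0 * ?w ^ k2"
        using C2[OF t r, of z] by (smt (verit) mult_right_mono wpos zero_le_power)
      also have "\<dots> \<le> max C2 0 * ?w ^ (k1 + k2)"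
        using w1 by (intro mult_left_mono power_increasing) auto
      finally show ?thesis .
    qed
    show "\<bar>H (t, r, z) + G (t, r, z)\<bar> \<le> (max C1 0 + max C2 0) * ?w ^ (k1 + k2)"
      using a b by (simp add: distrib_right)
  qed
qed

lemma pb_mult:
  assumes "pb T H" "pb T G"
  shows "pb T (\<lambda>x. H x * G x)"
  unfolding pb_def
proof (intro conjI allI impI)
  show "continuous_on (Sp T) (\<lambda>x. H x * G x)"
    using assms unfolding pb_def by (intro continuous_on_mult) auto
  fix K :: "real set"
  assume K: "compact K" "K \<subseteq> {0<..<T}"
  have "\<exists>C1 k1. \<forall>t\<in>K. \<forall>r>0. \<forall>z. \<bar>H (t, r, z)\<bar> \<le> C1 * (1 + r\<^sup>2 + z\<^sup>2) ^ k1"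
    using assms(1) K unfolding pb_def by simp
  then obtain C1 k1 where C10: "\<forall>t\<in>K. \<forall>r>0. \<forall>z. \<bar>H (t, r, z)\<bar> \<le> C1 * (1 + r\<^sup>2 + z\<^sup>2) ^ k1"
    by blast
  note C1 = C10[rule_format]
  have "\<exists>C2 k2. \<forall>t\<in>K. \<forall>r>0. \<forall>z. \<bar>G (t, r, z)\<bar> \<le> C2 * (1 + r\<^sup>2 + z\<^sup>2) ^ k2"
    using assms(2) K unfolding pb_def by simp
  then obtain C2 k2 where C20: "\<forall>t\<in>K. \<forall>r>0. \<forall>z. \<bar>G (t, r, z)\<bar> \<le> C2 * (1 + r\<^sup>2 + z\<^sup>2) ^ k2"
    by blast
  note C2 = C20[rule_format]
  show "\<exists>C k. \<forall>t\<in>K. \<forall>r>0. \<forall>z. \<bar>H (t, r, z) * G (t, r, z)\<bar> \<le> C * (1 + r\<^sup>2 + z\<^sup>2) ^ k"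
  proof (intro exI ballI allI impI)
    fix t r z :: real assume t: "t \<in> K" and r: "0 < r"
    let ?w = "1 + r\<^sup>2 + z\<^sup>2"
    have a: "\<bar>H (t, r, z)\<bar> \<le> max C1 0 * ?w ^ k1"
      using C1[OF t r, of z] by (smt (verit) mult_right_mono wpos zero_le_power)
    have b: "\<bar>G (t, r, z)\<bar> \<le> max C2 0 * ?w ^ k2"
      using C2[OF t r, of z] by (smt (verit) mult_right_mono wpos zero_le_power)
    have "\<bar>H (t, r, z) * G (t, r, z)\<bar> = \<bar>H (t, r, z)\<bar> * \<bar>G (t, r, z)\<bar>" by (simp add: abs_mult)
    also have "\<dots> \<le> (max C1 0 * ?w ^ k1) * (max C2 0 * ?w ^ k2)"
      by (rule mult_mono[OF a b]) (use wpos[of r z] in auto)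
    also have "\<dots> = (max C1 0 * max C2 0) * ?w ^ (k1 + k2)" by (simp only: power_add mult_ac)
    finally show "\<bar>H (t, r, z) * G (t, r, z)\<bar> \<le> (max C1 0 * max C2 0) * ?w ^ (k1 + k2)" .
  qed
qed

lemma pb_const: "pb T (\<lambda>x. c)"
  unfolding pb_def by (intro conjI continuous_on_const allI impI exI[of _ "\<bar>c\<bar>"] exI[of _ "0::nat"]) auto

lemma good_cmult: "good T H \<Longrightarrow> good T (\<lambda>x. c * H x)"
  using pb_mult_good[OF pb_const] .

lemma good_minus: "good T H \<Longrightarrow> good T (\<lambda>x. - H x)"
  using good_cmult[of T H "-1"] by simp

lemma good_diff: "good T H \<Longrightarrow> good T G \<Longrightarrow> good T (\<lambda>x. H x - G x)"
  using good_add[of T H "\<lambda>x. - G x"] good_minus by simp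

lemma powr_pb_bound:
  fixes r z m :: real
  assumes "0 < r" "0 \<le> m"
  shows "r powr m \<le> (1 + r\<^sup>2 + z\<^sup>2) ^ nat \<lceil>m\<rceil>"
proof (cases "r \<le> 1")
  case True
  then have "r powr m \<le> 1" using assms by (simp add: powr_le1)
  also have "1 \<le> (1 + r\<^sup>2 + z\<^sup>2) ^ nat \<lceil>m\<rceil>" by (intro one_le_power) simp
  finally show ?thesis .
next
  case False
  have "r powr m \<le> r powr (real (nat \<lceil>m\<rceil>))"
  proof (rule powr_mono)
    have "0 \<le> \<lceil>m\<rceil>" using assms(2) by simp
    then show "m \<le> real (nat \<lceil>m\<rceil>)" by (simp add: le_of_int_ceiling)
  qed (use False in simp)
  also have "\<dots> = r ^ nat \<lceil>m\<rceil>" using assms by (subst powr_realpow) (simp_all del: of_nat_nat)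
  also have "\<dots> \<le> (1 + r\<^sup>2 + z\<^sup>2) ^ nat \<lceil>m\<rceil>"
  proof (rule power_mono)
    have "r * 1 \<le> r * r" using False by (intro mult_left_mono) auto
    moreover have "0 \<le> z\<^sup>2" by simp
    ultimately show "r \<le> 1 + r\<^sup>2 + z\<^sup>2" unfolding power2_eq_square by linarith
  qed (use assms in auto)
  finally show ?thesis .
qed

lemma pb_powr: "0 \<le> m \<Longrightarrow> pb T (\<lambda>x. fst (snd x) powr m)"
  unfolding pb_def
proof (intro conjI allI impI)
  show "continuous_on (Sp T) (\<lambda>x. fst (snd x) powr m)"
    by (intro continuous_intros) (auto simp: Sp_def)
  fix K :: "real set" assume "0 \<le> m"
  show "\<exists>C k. \<forall>t\<in>K. \<forall>r>0. \<forall>z. \<bar>fst (snd (t, r, z)) powr m\<bar> \<le> C * (1 + r\<^sup>2 + z\<^sup>2) ^ k"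
    using powr_pb_bound \<open>0 \<le> m\<close> by (intro exI[of _ 1] exI[of _ "nat \<lceil>m\<rceil>"]) auto
qed

lemma pb_r: "pb T (\<lambda>x. fst (snd x))"
proof -
  have "pb T (\<lambda>x. fst (snd x) powr 1)" by (rule pb_powr) simp
  moreover have "continuous_on (Sp T) (\<lambda>x. fst (snd x))" by (intro continuous_intros)
  ultimately show ?thesis unfolding pb_def by (auto simp: Sp_def)
qed

lemma good_D:
  assumes sm: "smooth_on (SS T) (unc f)" and dec: "rapid_decay {0<..<T} f"
    and bs: "set bs \<subseteq> Basis"
  shows "good T (dirs bs (unc f))"
  unfolding good_def
proof (intro conjI allI impI)
  show "continuous_on (Sp T) (dirs bs (unc f))"
    using sm_cont[OF sm bs] Sp_SS continuous_on_subset by blast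
  fix K :: "real set" and N :: nat assume K: "compact K" "K \<subseteq> {0<..<T}"
  obtain C where "\<forall>t\<in>K. \<forall>r z. \<bar>dirs bs (unc f) (t, r, z)\<bar> * (1 + r\<^sup>2 + z\<^sup>2) ^ N \<le> C"
    using dec[unfolded rapid_decay_def, rule_format, OF bs K(1) K(2), of N] by blast
  then show "\<exists>C. \<forall>t\<in>K. \<forall>r>0. \<forall>z. \<bar>dirs bs (unc f) (t, r, z)\<bar> * (1 + r\<^sup>2 + z\<^sup>2) ^ N \<le> C"
    by blast
qed

definition rho :: "real \<Rightarrow> real" where "rho x = inverse (1 + x\<^sup>2)"

lemma rho_pos: "0 < rho x" by (simp add: rho_def add_pos_nonneg)
lemma abs_rho[simp]: "\<bar>rho x\<bar> = rho x" using rho_pos[of x] by simp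
lemma rho_nonneg[simp]: "0 \<le> rho x" using rho_pos[of x] by simp
lemma rho_le1: "rho x \<le> 1" by (simp add: rho_def inverse_le_1_iff)

lemma rho_int: "integrable lborel rho"
proof -
  have "set_integrable lborel (einterval (-\<infinity>) \<infinity>) (\<lambda>x. inverse (1 + x^2))"
    by (rule integrable_inverse_1_plus_square)
  then show ?thesis by (simp add: set_integrable_def rho_def[abs_def])
qed

lemma rho_tendsto_top: "(rho \<longlongrightarrow> 0) at_top"
  unfolding rho_def by real_asymp

lemma rho_tendsto_bot: "(rho \<longlongrightarrow> 0) at_bot"
  unfolding rho_def by real_asymp

lemma isCont_slice_z:
  fixes H :: "real \<times> real \<times> real \<Rightarrow> real"
  assumes "isCont H (t, r, z0)"
  shows "isCont (\<lambda>s. H (t, r, s)) z0"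
proof -
  have "isCont (\<lambda>s. (t,r,s)) z0" by (intro continuous_intros)
  then have "isCont (H \<circ> (\<lambda>s. (t,r,s))) z0" using assms by (intro continuous_at_compose) simp_all
  then show ?thesis by (simp add: o_def)
qed

lemma isCont_slice_r:
  fixes H :: "real \<times> real \<times> real \<Rightarrow> real"
  assumes "isCont H (t, r0, z)"
  shows "isCont (\<lambda>s. H (t, s, z)) r0"
proof -
  have "isCont (\<lambda>s. (t,s,z)) r0" by (intro continuous_intros)
  then have "isCont (H \<circ> (\<lambda>s. (t,s,z))) r0" using assms by (intro continuous_at_compose) simp_all
  then show ?thesis by (simp add: o_def)
qed

lemma good_isCont:
  assumes "good T H" "0 < t" "t < T" "0 < r"
  shows "isCont H (t, r, z)"
proof -
  have cH: "continuous_on (Sp T) H" using assms(1) unfolding good_def by (rule conjunct1)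
  have mem: "(t, r, z) \<in> Sp T" using assms by simp
  show ?thesis
    by (rule continuous_on_eq_continuous_at[OF open_Sp, THEN iffD1, OF cH, rule_format, OF mem])
qed

definition Inn :: "(real \<times> real \<times> real \<Rightarrow> real) \<Rightarrow> real \<Rightarrow> real \<Rightarrow> real" where
  "Inn H t z = (LINT r:{0<..}|lborel. H (t, r, z))"

lemma Inn_def': "Inn H t z = (\<integral>r. indicator {0<..} r * H (t, r, z) \<partial>lborel)"
  by (simp add: Inn_def set_lebesgue_integral_def)

lemma good_bound:
  assumes "good T H" "compact K" "K \<subseteq> {0<..<T}"
  shows "\<exists>C\<ge>0. \<forall>t\<in>K. \<forall>r>0. \<forall>z. \<bar>H (t, r, z)\<bar> \<le> C * rho r * rho z"
proof -
  have "\<exists>C. \<forall>t\<in>K. \<forall>r>0. \<forall>z. \<bar>H (t, r, z)\<bar> * (1 + r\<^sup>2 + z\<^sup>2) ^ 2 \<le> C"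
    using assms unfolding good_def by simp
  then obtain C where C0: "\<forall>t\<in>K. \<forall>r>0. \<forall>z. \<bar>H (t, r, z)\<bar> * (1 + r\<^sup>2 + z\<^sup>2) ^ 2 \<le> C"
    by blast
  note C = C0[rule_format]
  show ?thesis
  proof (intro exI[of _ "max C 0"] conjI ballI allI impI)
    fix t r z :: real assume t: "t \<in> K" and r: "0 < r"
    have p: "(1 + r\<^sup>2) * (1 + z\<^sup>2) \<le> (1 + r\<^sup>2 + z\<^sup>2) ^ 2"
    proof -
      have "(1 + r\<^sup>2 + z\<^sup>2) ^ 2 - (1 + r\<^sup>2) * (1 + z\<^sup>2) = r\<^sup>2 + z\<^sup>2 + (r\<^sup>2)\<^sup>2 + (z\<^sup>2)\<^sup>2 + r\<^sup>2 * z\<^sup>2"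
        by (simp add: power2_eq_square algebra_simps)
      moreover have "0 \<le> r\<^sup>2 + z\<^sup>2 + (r\<^sup>2)\<^sup>2 + (z\<^sup>2)\<^sup>2 + r\<^sup>2 * z\<^sup>2" by simp
      ultimately show ?thesis by linarith
    qed
    have pp: "0 < (1 + r\<^sup>2) * (1 + z\<^sup>2)" by (simp add: add_pos_nonneg)
    have "\<bar>H (t, r, z)\<bar> * ((1 + r\<^sup>2) * (1 + z\<^sup>2)) \<le> \<bar>H (t, r, z)\<bar> * (1 + r\<^sup>2 + z\<^sup>2) ^ 2"
      using p by (intro mult_left_mono) auto
    also have "\<dots> \<le> max C 0" using C[OF t r, of z] by simp
    finally have "\<bar>H (t, r, z)\<bar> \<le> max C 0 / ((1 + r\<^sup>2) * (1 + z\<^sup>2))"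
      using pp by (simp add: le_divide_eq)
    then show "\<bar>H (t, r, z)\<bar> \<le> max C 0 * rho r * rho z"
      by (simp add: rho_def divide_inverse mult.assoc)
  qed simp
qed

lemma Jmeas:
  fixes H :: "real \<times> real \<times> real \<Rightarrow> real"
  assumes "continuous_on (Sp T) H" "0 < t" "t < T"
  shows "(\<lambda>r. indicator {0<..} r * H (t, r, z)) \<in> borel_measurable lborel"
proof -
  have c: "continuous_on {0<..} (\<lambda>r. H (t, r, z))"
    by (rule continuous_on_compose2[OF assms(1)]) (use assms in \<open>auto intro!: continuous_intros\<close>)
  have "(\<lambda>r. indicator {0<..} r *\<^sub>R H (t, r, z)) \<in> borel_measurable borel"
    by (rule borel_measurable_continuous_on_indicator[OF _ c]) auto
  then show ?thesis by simp
qed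

lemma Jint:
  assumes "good T H" "0 < t" "t < T"
  shows "integrable lborel (\<lambda>r. indicator {0<..} r * H (t, r, z))"
proof -
  obtain C where C: "C \<ge> 0" "\<And>r z. r > 0 \<Longrightarrow> \<bar>H (t, r, z)\<bar> \<le> C * rho r * rho z"
    using good_bound[OF assms(1), of "{t}"] assms by auto
  show ?thesis
  proof (rule Bochner_Integration.integrable_bound[where f="\<lambda>r. C * rho z * rho r"])
    show "integrable lborel (\<lambda>r. C * rho z * rho r)" using rho_int by simp
    show "(\<lambda>r. indicator {0<..} r * H (t, r, z)) \<in> borel_measurable lborel"
      using Jmeas[of T H t] assms unfolding good_def by simp
    show "AE r in lborel. norm (indicator {0<..} r * H (t, r, z)) \<le> norm (C * rho z * rho r)"
      using C rho_pos by (intro AE_I2) (auto simp: indicator_def abs_mult mult_ac)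
  qed
qed

lemma Inn_bound:
  assumes "good T H" "compact K" "K \<subseteq> {0<..<T}"
  shows "\<exists>C\<ge>0. \<forall>t\<in>K. \<forall>z. \<bar>Inn H t z\<bar> \<le> C * rho z"
proof -
  obtain C where C: "C \<ge> 0" "\<And>t r z. t \<in> K \<Longrightarrow> r > 0 \<Longrightarrow> \<bar>H (t, r, z)\<bar> \<le> C * rho r * rho z"
    using good_bound[OF assms] by auto
  let ?I = "\<integral>r. rho r \<partial>lborel"
  have I0: "0 \<le> ?I" using rho_pos by (intro integral_nonneg_AE) (auto intro: less_imp_le)
  show ?thesis
  proof (intro exI[of _ "C * ?I"] conjI ballI allI)
    show "0 \<le> C * ?I" using C I0 by simp
    fix t z assume t: "t \<in> K"
    then have t': "0 < t" "t < T" using assms by auto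
    have "\<bar>Inn H t z\<bar> \<le> (\<integral>r. C * rho z * rho r \<partial>lborel)"
      unfolding Inn_def'
    proof (rule Bochner_Integration.integral_abs_bound_integral)
      show "integrable lborel (\<lambda>r. indicator {0<..} r * H (t, r, z))" using Jint assms t' by blast
      show "integrable lborel (\<lambda>r. C * rho z * rho r)" using rho_int by simp
      show "\<bar>indicator {0<..} r * H (t, r, z)\<bar> \<le> C * rho z * rho r" for r
        using C(1) C(2)[OF t, of r z] rho_pos[of r] rho_pos[of z]
        by (auto simp: indicator_def abs_mult mult_ac)
    qed
    also have "\<dots> = C * ?I * rho z" by simp
    finally show "\<bar>Inn H t z\<bar> \<le> C * ?I * rho z" .
  qed
qed

lemma Inn_cont_z:
  assumes "good T H" "0 < t" "t < T"
  shows "isCont (\<lambda>z. Inn H t z) z0"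
proof -
  obtain C where C: "C \<ge> 0" "\<And>r z. r > 0 \<Longrightarrow> \<bar>H (t, r, z)\<bar> \<le> C * rho r * rho z"
    using good_bound[OF assms(1), of "{t}"] assms by auto
  show ?thesis
  unfolding Inn_def'
proof (rule cont_lebesgue[where d=1 and g="\<lambda>r. C * rho r"])
  show "(\<lambda>r. indicator {0<..} r * H (t, r, s)) \<in> borel_measurable lborel" for s
    using Jmeas[of T H t] assms unfolding good_def by simp
  show "integrable lborel (\<lambda>r. C * rho r)" using rho_int by simp
  show "\<bar>indicator {0<..} r * H (t, r, s)\<bar> \<le> C * rho r" for r s
  proof (cases "r > 0")
    case True
    have "\<bar>H (t, r, s)\<bar> \<le> C * rho r * rho s" using C(2)[OF True] .
    also have "\<dots> \<le> C * rho r * 1" using C(1) rho_pos[of r] rho_le1[of s]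
      by (intro mult_left_mono) auto
    finally show ?thesis using True by simp
  qed (use C rho_pos in \<open>auto intro: less_imp_le\<close>)
  show "isCont (\<lambda>s. indicator {0<..} r * H (t, r, s)) z0" for r
  proof (cases "r > 0")
    case True
    have "isCont (\<lambda>s. H (t, r, s)) z0"
      using good_isCont[OF assms True] by (rule isCont_slice_z)
    then show ?thesis by (intro continuous_intros)
  qed simp
qed simp
qed

lemma Inn_int_z:
  assumes "good T H" "0 < t" "t < T"
  shows "integrable lborel (\<lambda>z. Inn H t z)"
proof -
  obtain C where C: "C \<ge> 0" "\<And>z. \<bar>Inn H t z\<bar> \<le> C * rho z"
    using Inn_bound[OF assms(1), of "{t}"] assms by auto
  show ?thesis
  proof (rule Bochner_Integration.integrable_bound[where f="\<lambda>z. C * rho z"])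
  show "integrable lborel (\<lambda>z. C * rho z)" using rho_int by simp
  show "(\<lambda>z. Inn H t z) \<in> borel_measurable lborel"
    using Inn_cont_z[OF assms] by (simp add: borel_measurable_continuous_onI continuous_at_imp_continuous_on)
  show "AE z in lborel. norm (Inn H t z) \<le> norm (C * rho z)"
    using C rho_pos by (intro AE_I2) (auto simp: abs_mult)
  qed
qed

lemma ball_sub:
  assumes "0 < t" "t < T"
  shows "min t (T - t) / 2 > 0" "cball t (min t (T - t) / 2) \<subseteq> {0<..<T}"
    "compact (cball t (min t (T - t) / 2))"
  using assms by (auto simp: dist_real_def abs_if split: if_splits)

lemma Inn_deriv_t:
  assumes gH: "good T H" and gD: "good T Ht"
    and der: "\<And>s r z. 0 < s \<Longrightarrow> s < T \<Longrightarrow> 0 < r \<Longrightarrow>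
       ((\<lambda>s. H (s, r, z)) has_real_derivative Ht (s, r, z)) (at s)"
    and t: "0 < t" "t < T"
  shows "((\<lambda>s. Inn H s z) has_real_derivative Inn Ht t z) (at t)"
proof -
  define d where "d = min t (T - t) / 2"
  note bs = ball_sub[OF t, folded d_def]
  obtain C where C: "C \<ge> 0" "\<And>s r z. s \<in> cball t d \<Longrightarrow> r > 0 \<Longrightarrow> \<bar>Ht (s, r, z)\<bar> \<le> C * rho r * rho z"
    using good_bound[OF gD bs(3) bs(2)] by auto
  have sb: "0 < s \<and> s < T" if "s \<in> ball t d" for s
  proof -
    have "s \<in> cball t d" using that by simp
    then have "s \<in> {0<..<T}" by (rule subsetD[OF bs(2)])
    then show ?thesis by simp
  qed
  show ?thesis unfolding Inn_def'
  proof (rule leibniz_lebesgue[where d=d and g="\<lambda>r. C * rho z * rho r"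
        and f'="\<lambda>s r. indicator {0<..} r * Ht (s, r, z)"])
    show "0 < d" by (rule bs(1))
    show "integrable lborel (\<lambda>r. indicator {0<..} r * H (s, r, z))" if "s \<in> ball t d" for s
      using Jint[OF gH] sb[OF that] by blast
    show "integrable lborel (\<lambda>r. C * rho z * rho r)" using rho_int by simp
    show "((\<lambda>s. indicator {0<..} r * H (s, r, z)) has_real_derivative indicator {0<..} r * Ht (s, r, z)) (at s)"
      if "s \<in> ball t d" for r s
    proof (cases "r > 0")
      case True then show ?thesis using der[of s r z] sb[OF that] by (auto intro: DERIV_cmult)
    qed simp
    show "\<bar>indicator {0<..} r * Ht (s, r, z)\<bar> \<le> C * rho z * rho r" if "s \<in> ball t d" for r s
      using C(1) C(2)[of s r z] that by (auto simp: indicator_def mult_ac)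
  qed
qed

lemma E_deriv_t:
  assumes gH: "good T H" and gD: "good T Ht"
    and der: "\<And>s r z. 0 < s \<Longrightarrow> s < T \<Longrightarrow> 0 < r \<Longrightarrow>
       ((\<lambda>s. H (s, r, z)) has_real_derivative Ht (s, r, z)) (at s)"
    and t: "0 < t" "t < T"
  shows "((\<lambda>s. LINT z|lborel. Inn H s z) has_real_derivative (LINT z|lborel. Inn Ht t z)) (at t)"
proof -
  define d where "d = min t (T - t) / 2"
  note bs = ball_sub[OF t, folded d_def]
  obtain C where C: "C \<ge> 0" "\<And>s z. s \<in> cball t d \<Longrightarrow> \<bar>Inn Ht s z\<bar> \<le> C * rho z"
    using Inn_bound[OF gD bs(3) bs(2)] by auto
  have sb: "0 < s \<and> s < T" if "s \<in> ball t d" for s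
  proof -
    have "s \<in> cball t d" using that by simp
    then have "s \<in> {0<..<T}" by (rule subsetD[OF bs(2)])
    then show ?thesis by simp
  qed
  show ?thesis
  proof (rule leibniz_lebesgue[where d=d and g="\<lambda>z. C * rho z"
        and f="\<lambda>s z. Inn H s z" and f'="\<lambda>s z. Inn Ht s z"])
    show "0 < d" by (rule bs(1))
    show "integrable lborel (\<lambda>z. Inn H s z)" if "s \<in> ball t d" for s
      using Inn_int_z[OF gH] sb[OF that] by blast
    show "integrable lborel (\<lambda>z. C * rho z)" using rho_int by simp
    show "((\<lambda>s. Inn H s z) has_real_derivative Inn Ht s z) (at s)" if "s \<in> ball t d" for z s
      using Inn_deriv_t[OF gH gD der] sb[OF that] by blast
    show "\<bar>Inn Ht s z\<bar> \<le> C * rho z" if "s \<in> ball t d" for z s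
      using C(2)[of s z] that by auto
  qed
qed

lemma Inn_deriv_z:
  assumes gH: "good T H" and gD: "good T Hz"
    and der: "\<And>s r z. 0 < s \<Longrightarrow> s < T \<Longrightarrow> 0 < r \<Longrightarrow>
       ((\<lambda>z. H (s, r, z)) has_real_derivative Hz (s, r, z)) (at z)"
    and t: "0 < t" "t < T"
  shows "((\<lambda>z. Inn H t z) has_real_derivative Inn Hz t z) (at z)"
proof -
  obtain C where C: "C \<ge> 0" "\<And>r z. r > 0 \<Longrightarrow> \<bar>Hz (t, r, z)\<bar> \<le> C * rho r * rho z"
    using good_bound[OF gD, of "{t}"] t by auto
  show ?thesis unfolding Inn_def'
  proof (rule leibniz_lebesgue[where d=1 and g="\<lambda>r. C * rho r"
        and f="\<lambda>s r. indicator {0<..} r * H (t, r, s)" and f'="\<lambda>s r. indicator {0<..} r * Hz (t, r, s)"])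
    show "integrable lborel (\<lambda>r. indicator {0<..} r * H (t, r, s))" for s
      using Jint[OF gH t] by blast
    show "integrable lborel (\<lambda>r. C * rho r)" using rho_int by simp
    show "((\<lambda>s. indicator {0<..} r * H (t, r, s)) has_real_derivative indicator {0<..} r * Hz (t, r, s)) (at s)"
      for r s
    proof (cases "r > 0")
      case True then show ?thesis using der[of t r s] t by (auto intro: DERIV_cmult)
    qed simp
    show "\<bar>indicator {0<..} r * Hz (t, r, s)\<bar> \<le> C * rho r" for r s
    proof (cases "r > 0")
      case True
      have "\<bar>Hz (t, r, s)\<bar> \<le> C * rho r * rho s" by (rule C(2)[OF True])
      also have "\<dots> \<le> C * rho r * 1" using C(1) rho_le1[of s]
        by (intro mult_left_mono) auto
      finally show ?thesis using True by simp
    qed (use C in auto)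
  qed simp
qed

lemma Inn_FTC_r:
  assumes gH: "good T H" and gD: "good T Hr"
    and der: "\<And>s r z. 0 < s \<Longrightarrow> s < T \<Longrightarrow> 0 < r \<Longrightarrow>
       ((\<lambda>r. H (s, r, z)) has_real_derivative Hr (s, r, z)) (at r)"
    and lim0: "((\<lambda>r. H (t, r, z)) \<longlongrightarrow> 0) (at_right 0)"
    and t: "0 < t" "t < T"
  shows "Inn Hr t z = 0"
proof -
  obtain C where C: "C \<ge> 0" "\<And>r z. r > 0 \<Longrightarrow> \<bar>H (t, r, z)\<bar> \<le> C * rho r * rho z"
    using good_bound[OF gH, of "{t}"] t by auto
  have "(LBINT x=ereal 0..\<infinity>. Hr (t, x, z)) = 0 - 0"
  proof (rule interval_integral_FTC_integrable[where F="\<lambda>r. H (t, r, z)"])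
    show "ereal 0 < \<infinity>" by simp
    show "((\<lambda>r. H (t, r, z)) has_vector_derivative Hr (t, x, z)) (at x)"
      if "ereal 0 < ereal x" "ereal x < \<infinity>" for x
      using der[of t x z] t that by (simp add: has_real_derivative_iff_has_vector_derivative)
    show "isCont (\<lambda>r. Hr (t, r, z)) x" if "ereal 0 < ereal x" "ereal x < \<infinity>" for x
      using good_isCont[OF gD t, of x z] that by (auto intro: isCont_slice_r)
    show "set_integrable lborel (einterval (ereal 0) \<infinity>) (\<lambda>r. Hr (t, r, z))"
      using Jint[OF gD t, of z] by (simp add: set_integrable_def)
    show "(((\<lambda>r. H (t, r, z)) \<circ> real_of_ereal) \<longlongrightarrow> 0) (at_right (ereal 0))"
      using lim0 by (simp add: ereal_tendsto_simps1)
    have "((\<lambda>r. H (t, r, z)) \<longlongrightarrow> 0) at_top"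
    proof (rule Lim_null_comparison)
      show "\<forall>\<^sub>F r in at_top. norm (H (t, r, z)) \<le> C * rho z * rho r"
        using eventually_gt_at_top[of 0] by eventually_elim (use C in \<open>auto simp: mult_ac\<close>)
      show "((\<lambda>r. C * rho z * rho r) \<longlongrightarrow> 0) at_top"
        using tendsto_mult_left[OF rho_tendsto_top, of "C * rho z"] by simp
    qed
    then show "(((\<lambda>r. H (t, r, z)) \<circ> real_of_ereal) \<longlongrightarrow> 0) (at_left \<infinity>)"
      by (simp add: ereal_tendsto_simps1)
  qed
  then show ?thesis by (simp add: interval_lebesgue_integral_def Inn_def)
qed

lemma E_FTC_z:
  assumes gH: "good T H" and gD: "good T Hz"
    and der: "\<And>s r z. 0 < s \<Longrightarrow> s < T \<Longrightarrow> 0 < r \<Longrightarrow>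
       ((\<lambda>z. H (s, r, z)) has_real_derivative Hz (s, r, z)) (at z)"
    and t: "0 < t" "t < T"
  shows "(LINT z|lborel. Inn Hz t z) = 0"
proof -
  obtain C where C: "C \<ge> 0" "\<And>z. \<bar>Inn H t z\<bar> \<le> C * rho z"
    using Inn_bound[OF gH, of "{t}"] t by auto
  have lim: "((\<lambda>z. Inn H t z) \<longlongrightarrow> 0) F" if "(rho \<longlongrightarrow> 0) F" for F
  proof (rule Lim_null_comparison)
    show "\<forall>\<^sub>F z in F. norm (Inn H t z) \<le> C * rho z" using C by auto
    show "((\<lambda>z. C * rho z) \<longlongrightarrow> 0) F"
      using tendsto_mult_left[OF that, of C] by simp
  qed
  have "(LBINT x=-\<infinity>..\<infinity>. Inn Hz t x) = 0 - 0"
  proof (rule interval_integral_FTC_integrable[where F="\<lambda>z. Inn H t z"])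
    show "- \<infinity> < (\<infinity>::ereal)" by simp
    show "((\<lambda>z. Inn H t z) has_vector_derivative Inn Hz t x) (at x)" for x
      using Inn_deriv_z[OF gH gD der t] by (simp add: has_real_derivative_iff_has_vector_derivative)
    show "isCont (\<lambda>z. Inn Hz t z) x" for x
      using Inn_cont_z[OF gD t] by blast
    show "set_integrable lborel (einterval (-\<infinity>) \<infinity>) (\<lambda>z. Inn Hz t z)"
      using Inn_int_z[OF gD t] by (simp add: set_integrable_def)
    show "(((\<lambda>z. Inn H t z) \<circ> real_of_ereal) \<longlongrightarrow> 0) (at_right (-\<infinity>))"
      using lim[OF rho_tendsto_bot] by (simp add: ereal_tendsto_simps1)
    show "(((\<lambda>z. Inn H t z) \<circ> real_of_ereal) \<longlongrightarrow> 0) (at_left \<infinity>)"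
      using lim[OF rho_tendsto_top] by (simp add: ereal_tendsto_simps1)
  qed
  then show ?thesis
    by (simp add: interval_lebesgue_integral_def set_lebesgue_integral_def)
qed

lemma alg_identity:
  fixes n nu r w wr U Ur Uz Urr Uzz Ut P Pr Pz Prr Pzz Prz Prt Pzt Prrt Pzzt W Wr Wz Wrr Wzz Wt :: real
  assumes r: "r > 0" and wr: "wr = n * w / r"
    and hu: "Ut + (- r * Pz) * Ur + ((n - 1) * P + r * Pr) * Uz = 2 * U * Pz + nu * (Urr + n / r * Ur + Uzz)"
    and hw: "Wt + (- r * Pz) * Wr + ((n - 1) * P + r * Pr) * Wz
           = 2 * U * Uz - (n - 3) * Pz * W + nu * (Wrr + n / r * Wr + Wzz)"
    and hp: "- (Prr + n / r * Pr + Pzz) = W"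
    and ht: "Wt = - (Prrt + n / r * Prt + Pzzt)"
  shows "(U * Ut + Pr * Prt + Pz * Pzt) * w =
     - nu * (Ur\<^sup>2 + Uz\<^sup>2 + W\<^sup>2) * w
     + (wr * (P * Prt + r * Pz * (U\<^sup>2 / 2 + P * W) + nu * (U * Ur + P * Wr - W * Pr))
        + w * (Pr * Prt + P * Prrt + (Pz + r * Prz) * (U\<^sup>2 / 2 + P * W)
               + r * Pz * (U * Ur + Pr * W + P * Wr)
               + nu * (Ur * Ur + U * Urr + Pr * Wr + P * Wrr - Wr * Pr - W * Prr)))
     + w * (Pz * Pzt + P * Pzzt - ((n - 1) * Pz + r * Prz) * (U\<^sup>2 / 2 + P * W)
            - ((n - 1) * P + r * Pr) * (U * Uz + Pz * W + P * Wz) + Pz * U\<^sup>2 + 2 * P * U * Uz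
            + nu * (Uz * Uz + U * Uzz + Pz * Wz + P * Wzz - Wz * Pz - W * Pzz))"
proof -
  have Ut: "Ut = 2 * U * Pz + nu * (Urr + n / r * Ur + Uzz) - ((- r * Pz) * Ur + ((n - 1) * P + r * Pr) * Uz)"
    using hu by (simp add: algebra_simps)
  have Wt: "Wt = 2 * U * Uz - (n - 3) * Pz * W + nu * (Wrr + n / r * Wr + Wzz) - ((- r * Pz) * Wr + ((n - 1) * P + r * Pr) * Wz)"
    using hw by (simp add: algebra_simps)
  have Prrt: "Prrt = - Wt - n / r * Prt - Pzzt" using ht by simp
  have Prr: "Prr = - W - n / r * Pr - Pzz" using hp by simp
  show ?thesis
    unfolding Ut Prrt Wt Prr wr using r
    by (simp add: field_simps power2_eq_square)
qed

lemma sm_sym: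
  assumes sm: "smooth_on (SS T) F" and ab: "a \<in> Basis" "b \<in> Basis" and cs: "set cs \<subseteq> Basis"
    and x: "x \<in> SS T"
  shows "dirs (a # b # cs) F x = dirs (b # a # cs) F x"
proof -
  let ?g = "dirs cs F"
  have "dirs [a, b] ?g x = dirs [b, a] ?g x"
  proof (rule clairaut[OF open_SS x])
    show "?g differentiable (at y)" if "y \<in> SS T" for y using sm_diff[OF sm cs that] .
    show "dirs [a] ?g differentiable (at y)" if "y \<in> SS T" for y
      using sm_diff[OF sm _ that, of "a # cs"] ab cs by (simp add: dirs_append)
    show "dirs [b] ?g differentiable (at y)" if "y \<in> SS T" for y
      using sm_diff[OF sm _ that, of "b # cs"] ab cs by (simp add: dirs_append)
    show "isCont (dirs [b, a] ?g) x"
      using sm_isCont[OF sm _ x, of "b # a # cs"] ab cs by (simp add: dirs_append)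
    show "isCont (dirs [a, b] ?g) x"
      using sm_isCont[OF sm _ x, of "a # b # cs"] ab cs by (simp add: dirs_append)
  qed
  then show ?thesis by (simp add: dirs_append)
qed

locale setting =
  fixes n \<nu> T :: real and u \<omega> \<psi> :: "real \<Rightarrow> real \<Rightarrow> real \<Rightarrow> real"
  assumes n: "n \<ge> 2" and nu: "\<nu> \<ge> 0" and T: "T > 0"
    and smu: "smooth_on (SS T) (unc u)"
    and smw: "smooth_on (SS T) (unc \<omega>)"
    and smp: "smooth_on (SS T) (unc \<psi>)"
    and decu: "rapid_decay {0<..<T} u"
    and decw: "rapid_decay {0<..<T} \<omega>"
    and decp: "rapid_decay {0<..<T} \<psi>"
    and eq_u: "\<And>t r z. 0 < t \<Longrightarrow> t < T \<Longrightarrow> 0 < r \<Longrightarrow>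
        dt u t r z + (- r * dz \<psi> t r z) * dr u t r z
          + ((n - 1) * \<psi> t r z + r * dr \<psi> t r z) * dz u t r z
        = 2 * u t r z * dz \<psi> t r z + \<nu> * lapn n u t r z"
    and eq_w: "\<And>t r z. 0 < t \<Longrightarrow> t < T \<Longrightarrow> 0 < r \<Longrightarrow>
        dt \<omega> t r z + (- r * dz \<psi> t r z) * dr \<omega> t r z
          + ((n - 1) * \<psi> t r z + r * dr \<psi> t r z) * dz \<omega> t r z
        = dz (\<lambda>t r z. (u t r z)\<^sup>2) t r z - (n - 3) * dz \<psi> t r z * \<omega> t r z
          + \<nu> * lapn n \<omega> t r z"
    and eq_p: "\<And>t r z. 0 < t \<Longrightarrow> t < T \<Longrightarrow> 0 < r \<Longrightarrow>
        - lapn n \<psi> t r z = \<omega> t r z"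
begin

abbreviation "Du bs \<equiv> dirs bs (unc u)"
abbreviation "Dw bs \<equiv> dirs bs (unc \<omega>)"
abbreviation "Dp bs \<equiv> dirs bs (unc \<psi>)"

lemma gu: "set bs \<subseteq> Basis \<Longrightarrow> good T (Du bs)" using good_D[OF smu decu] .
lemma gw: "set bs \<subseteq> Basis \<Longrightarrow> good T (Dw bs)" using good_D[OF smw decw] .
lemma gp: "set bs \<subseteq> Basis \<Longrightarrow> good T (Dp bs)" using good_D[OF smp decp] .

lemmas gD = gu gw gp

lemma pset: "set [] \<subseteq> (Basis :: (real \<times> real \<times> real) set)"
  "set [e1] \<subseteq> Basis" "set [e2] \<subseteq> Basis" "set [e3] \<subseteq> Basis"
  "set [e1, e2] \<subseteq> Basis" "set [e1, e3] \<subseteq> Basis" "set [e2, e2] \<subseteq> Basis" "set [e3, e3] \<subseteq> Basis"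
  "set [e2, e3] \<subseteq> Basis" "set [e3, e2] \<subseteq> Basis"
  "set [e2, e1, e2] \<subseteq> Basis" "set [e3, e1, e3] \<subseteq> Basis"
  "set [e1, e2, e2] \<subseteq> Basis" "set [e1, e3, e3] \<subseteq> Basis"
  using eB by auto

definition rr :: "real \<times> real \<times> real \<Rightarrow> real" where "rr x = fst (snd x)"
definition w :: "real \<times> real \<times> real \<Rightarrow> real" where "w x = rr x powr n"
definition wr :: "real \<times> real \<times> real \<Rightarrow> real" where "wr x = n * rr x powr (n - 1)"

lemma rr_app[simp]: "rr (t, r, z) = r" by (simp add: rr_def)

lemma pb_rr: "pb T rr" unfolding rr_def[abs_def] by (rule pb_r)
lemma pb_w: "pb T w" unfolding w_def[abs_def] rr_def using n by (intro pb_powr) simp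
lemma pb_wr: "pb T wr" unfolding wr_def[abs_def] rr_def using n
  by (intro pb_mult[OF pb_const] pb_powr) simp

lemma good_rr: "good T G \<Longrightarrow> good T (\<lambda>x. rr x * G x)" by (rule pb_mult_good[OF pb_rr])
lemma good_w: "good T G \<Longrightarrow> good T (\<lambda>x. w x * G x)" by (rule pb_mult_good[OF pb_w])
lemma good_wr: "good T G \<Longrightarrow> good T (\<lambda>x. wr x * G x)" by (rule pb_mult_good[OF pb_wr])

lemmas good_rules = good_w good_wr good_rr good_cmult good_add good_diff good_minus good_mult

definition "S x = (1/2) * (Du [] x * Du [] x) + Dp [] x * Dw [] x"
definition "Sr x = Du [] x * Du [e2] x + (Dp [e2] x * Dw [] x + Dp [] x * Dw [e2] x)"
definition "Sz x = Du [] x * Du [e3] x + (Dp [e3] x * Dw [] x + Dp [] x * Dw [e3] x)"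

definition "Q x = Dp [] x * Dp [e1, e2] x + rr x * (Dp [e3] x * S x)
   + \<nu> * (Du [] x * Du [e2] x + Dp [] x * Dw [e2] x - Dw [] x * Dp [e2] x)"
definition "A x = w x * Q x"
definition "Qr x = Dp [e2] x * Dp [e1, e2] x + Dp [] x * Dp [e2, e1, e2] x
   + (Dp [e3] x * S x + rr x * (Dp [e2, e3] x * S x + Dp [e3] x * Sr x))
   + \<nu> * (Du [e2] x * Du [e2] x + Du [] x * Du [e2, e2] x + (Dp [e2] x * Dw [e2] x + Dp [] x * Dw [e2, e2] x)
          - (Dw [e2] x * Dp [e2] x + Dw [] x * Dp [e2, e2] x))"
definition "Ar x = wr x * Q x + w x * Qr x"

definition "Qb x = Dp [] x * Dp [e1, e3] x - ((n - 1) * Dp [] x + rr x * Dp [e2] x) * S x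
   + Dp [] x * (Du [] x * Du [] x)
   + \<nu> * (Du [] x * Du [e3] x + Dp [] x * Dw [e3] x - Dw [] x * Dp [e3] x)"
definition "B x = w x * Qb x"
definition "Qz x = Dp [e3] x * Dp [e1, e3] x + Dp [] x * Dp [e3, e1, e3] x
   - (((n - 1) * Dp [e3] x + rr x * Dp [e3, e2] x) * S x + ((n - 1) * Dp [] x + rr x * Dp [e2] x) * Sz x)
   + (Dp [e3] x * (Du [] x * Du [] x) + Dp [] x * (2 * (Du [] x * Du [e3] x)))
   + \<nu> * (Du [e3] x * Du [e3] x + Du [] x * Du [e3, e3] x + (Dp [e3] x * Dw [e3] x + Dp [] x * Dw [e3, e3] x)
          - (Dw [e3] x * Dp [e3] x + Dw [] x * Dp [e3, e3] x))"
definition "Bz x = w x * Qz x"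

definition "HE x = w x * (Du [] x * Du [] x + Dp [e2] x * Dp [e2] x + Dp [e3] x * Dp [e3] x)"
definition "HEt x = w x * (2 * (Du [] x * Du [e1] x) + 2 * (Dp [e2] x * Dp [e1, e2] x) + 2 * (Dp [e3] x * Dp [e1, e3] x))"
definition "HD x = w x * (Du [e2] x * Du [e2] x + Du [e3] x * Du [e3] x + Dw [] x * Dw [] x)"

lemma good_S: "good T S" unfolding S_def[abs_def] by (intro good_rules gD pset)
lemma good_Sr: "good T Sr" unfolding Sr_def[abs_def] by (intro good_rules gD pset)
lemma good_Sz: "good T Sz" unfolding Sz_def[abs_def] by (intro good_rules gD pset)

lemmas gD' = gD good_S good_Sr good_Sz

lemma good_A: "good T A" unfolding A_def[abs_def] Q_def by (intro good_rules gD' pset)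
lemma good_Ar: "good T Ar" unfolding Ar_def[abs_def] Q_def Qr_def by (intro good_rules gD' pset)
lemma good_B: "good T B" unfolding B_def[abs_def] Qb_def by (intro good_rules gD' pset)
lemma good_Bz: "good T Bz" unfolding Bz_def[abs_def] Qz_def by (intro good_rules gD' pset)
lemma good_HE: "good T HE" unfolding HE_def[abs_def] by (intro good_rules gD' pset)
lemma good_HEt: "good T HEt" unfolding HEt_def[abs_def] by (intro good_rules gD' pset)
lemma good_HD: "good T HD" unfolding HD_def[abs_def] by (intro good_rules gD' pset)

end

lemma slice_t':
  "smooth_on (SS T) F \<Longrightarrow> set bs \<subseteq> Basis \<Longrightarrow> 0 < t \<Longrightarrow> t < T \<Longrightarrow> D' = dirs (e1 # bs) F (t, r, z) \<Longrightarrow>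
   ((\<lambda>s. dirs bs F (s, r, z)) has_real_derivative D') (at t)"
  using slice_t by blast
lemma slice_r':
  "smooth_on (SS T) F \<Longrightarrow> set bs \<subseteq> Basis \<Longrightarrow> 0 < t \<Longrightarrow> t < T \<Longrightarrow> D' = dirs (e2 # bs) F (t, r, z) \<Longrightarrow>
   ((\<lambda>s. dirs bs F (t, s, z)) has_real_derivative D') (at r)"
  using slice_r by blast
lemma slice_z':
  "smooth_on (SS T) F \<Longrightarrow> set bs \<subseteq> Basis \<Longrightarrow> 0 < t \<Longrightarrow> t < T \<Longrightarrow> D' = dirs (e3 # bs) F (t, r, z) \<Longrightarrow>
   ((\<lambda>s. dirs bs F (t, r, s)) has_real_derivative D') (at z)"
  using slice_z by blast

declare dirs.simps[simp del]

lemma dirs_Nil[simp]: "dirs [] F x = F x" by (simp add: dirs.simps)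

context setting
begin

lemma der_A:
  assumes "0 < s" "s < T" "0 < r"
  shows "((\<lambda>\<rho>. A (s, \<rho>, z)) has_real_derivative Ar (s, r, z)) (at r)"
  unfolding A_def Q_def S_def w_def rr_app
  apply (intro derivative_eq_intros slice_r'[OF smp] slice_r'[OF smu] slice_r'[OF smw])
  apply (simp_all add: assms pset eB)
  apply (simp_all add: Ar_def Q_def Qr_def S_def Sr_def w_def wr_def)
  apply (simp_all add: algebra_simps)
  done

lemma der_B:
  assumes "0 < s" "s < T" "0 < r"
  shows "((\<lambda>\<zeta>. B (s, r, \<zeta>)) has_real_derivative Bz (s, r, z)) (at z)"
  unfolding B_def Qb_def S_def w_def rr_app
  apply (intro derivative_eq_intros slice_z'[OF smp] slice_z'[OF smu] slice_z'[OF smw])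
  apply (simp_all add: assms pset eB)
  apply (simp_all add: Bz_def Qz_def S_def Sz_def w_def)
  apply (simp_all add: algebra_simps)
  done

lemma der_HE:
  assumes "0 < s" "s < T" "0 < r"
  shows "((\<lambda>\<tau>. HE (\<tau>, r, z)) has_real_derivative HEt (s, r, z)) (at s)"
  unfolding HE_def w_def rr_app
  apply (intro derivative_eq_intros slice_t'[OF smp] slice_t'[OF smu] slice_t'[OF smw])
  apply (simp_all add: assms pset eB)
  apply (simp_all add: HEt_def w_def)
  done

lemma Dw_t:
  assumes "0 < t" "t < T" "0 < r"
  shows "Dw [e1] (t, r, z) = - (Dp [e1, e2, e2] (t, r, z) + n / r * Dp [e1, e2] (t, r, z) + Dp [e1, e3, e3] (t, r, z))"
proof -
  have d1: "((\<lambda>s. Dw [] (s, r, z)) has_real_derivative Dw [e1] (t, r, z)) (at t)"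
    using slice_t[OF smw, where bs="[]" and t=t and r=r and z=z] assms by simp
  have d2: "((\<lambda>s. - (Dp [e2, e2] (s, r, z) + n / r * Dp [e2] (s, r, z) + Dp [e3, e3] (s, r, z))) has_real_derivative
      - (Dp [e1, e2, e2] (t, r, z) + n / r * Dp [e1, e2] (t, r, z) + Dp [e1, e3, e3] (t, r, z))) (at t)"
    apply (intro derivative_eq_intros slice_t'[OF smp])
    apply (simp_all add: assms pset eB)
    apply (simp add: algebra_simps)?
    done
  have eqf: "- (Dp [e2, e2] (s, r, z) + n / r * Dp [e2] (s, r, z) + Dp [e3, e3] (s, r, z)) = Dw [] (s, r, z)"
    if "s \<in> {0<..<T}" for s
    using eq_p[of s r z] lapn_eq[OF smp, of s n r z] that assms by (simp add: dirs.simps)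
  have "((\<lambda>s. Dw [] (s, r, z)) has_real_derivative
      - (Dp [e1, e2, e2] (t, r, z) + n / r * Dp [e1, e2] (t, r, z) + Dp [e1, e3, e3] (t, r, z))) (at t)"
    by (rule has_field_derivative_transform_within_open[OF d2, where S="{0<..<T}"]) (use assms eqf in auto)
  then show ?thesis using d1 DERIV_unique by blast
qed

lemma pointwise:
  assumes t: "0 < t" "t < T" and r: "0 < r"
  shows "HEt (t, r, z) = 2 * (- \<nu> * HD (t, r, z) + Ar (t, r, z) + Bz (t, r, z))"
proof -
  let ?x = "(t, r, z)"
  have wr: "wr ?x = n * w ?x / r"
    using r by (simp add: wr_def w_def powr_diff)
  have hu: "Du [e1] ?x + (- r * Dp [e3] ?x) * Du [e2] ?x + ((n - 1) * Dp [] ?x + r * Dp [e2] ?x) * Du [e3] ?x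
      = 2 * Du [] ?x * Dp [e3] ?x + \<nu> * (Du [e2, e2] ?x + n / r * Du [e2] ?x + Du [e3, e3] ?x)"
    using eq_u[OF t r, of z] t
    by (simp add: dt_eq[OF smu] dr_eq[OF smu] dz_eq[OF smu] dr_eq[OF smp] dz_eq[OF smp] lapn_eq[OF smu])
  have hw: "Dw [e1] ?x + (- r * Dp [e3] ?x) * Dw [e2] ?x + ((n - 1) * Dp [] ?x + r * Dp [e2] ?x) * Dw [e3] ?x
      = 2 * Du [] ?x * Du [e3] ?x - (n - 3) * Dp [e3] ?x * Dw [] ?x
        + \<nu> * (Dw [e2, e2] ?x + n / r * Dw [e2] ?x + Dw [e3, e3] ?x)"
    using eq_w[OF t r, of z] t
    by (simp add: dt_eq[OF smw] dr_eq[OF smw] dz_eq[OF smw] dr_eq[OF smp] dz_eq[OF smp] lapn_eq[OF smw]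
        dzsq_eq[OF smu])
  have hp: "- (Dp [e2, e2] ?x + n / r * Dp [e2] ?x + Dp [e3, e3] ?x) = Dw [] ?x"
    using eq_p[OF t r, of z] t by (simp add: lapn_eq[OF smp])
  have s1: "Dp [e2, e1, e2] ?x = Dp [e1, e2, e2] ?x"
    using sm_sym[OF smp, of e2 e1 "[e2]" ?x] eB t by simp
  have s2: "Dp [e3, e1, e3] ?x = Dp [e1, e3, e3] ?x"
    using sm_sym[OF smp, of e3 e1 "[e3]" ?x] eB t by simp
  have s3: "Dp [e3, e2] ?x = Dp [e2, e3] ?x"
    using sm_sym[OF smp, of e3 e2 "[]" ?x] eB t by simp
  have ht: "Dw [e1] ?x = - (Dp [e2, e1, e2] ?x + n / r * Dp [e1, e2] ?x + Dp [e3, e1, e3] ?x)"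
    using Dw_t[OF t r, of z] s1 s2 by simp
  note AI = alg_identity[OF r wr hu hw hp ht, where Prz = "Dp [e2, e3] ?x" and Pzt = "Dp [e1, e3] ?x"]
  show ?thesis
    unfolding HEt_def HD_def Ar_def Bz_def Q_def Qr_def Qz_def S_def Sr_def Sz_def s3 rr_app
    using AI by (simp add: algebra_simps power2_eq_square)
qed

end

lemma Inn_add:
  assumes "good T F" "good T G" "0 < t" "t < T"
  shows "Inn (\<lambda>x. F x + G x) t z = Inn F t z + Inn G t z"
  unfolding Inn_def' using Jint[OF assms(1,3,4), of z] Jint[OF assms(2,3,4), of z]
  by (simp add: distrib_left integral_add)

lemma Inn_cmult: "Inn (\<lambda>x. c * F x) t z = c * Inn F t z"
  unfolding Inn_def' by (simp add: mult.left_commute)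

context setting
begin

lemma cont_Q: "continuous_on (SS T) Q"
  unfolding Q_def[abs_def] S_def rr_def
  by (intro continuous_intros sm_cont[OF smp] sm_cont[OF smu] sm_cont[OF smw] pset)

lemma lim_A:
  assumes t: "0 < t" "t < T"
  shows "((\<lambda>r. A (t, r, z)) \<longlongrightarrow> 0) (at_right 0)"
proof -
  have c: "isCont Q (t, 0, z)"
    using cont_Q open_SS t by (simp add: continuous_on_eq_continuous_at)
  have q: "((\<lambda>r. Q (t, r, z)) \<longlongrightarrow> Q (t, 0, z)) (at_right 0)"
    using isCont_slice_r[OF c] by (simp add: isCont_def filterlim_at_split)
  have p: "((\<lambda>r. r powr n) \<longlongrightarrow> 0) (at_right 0)"
  proof (rule tendsto_zero_powrI)
    show "((\<lambda>r. r) \<longlongrightarrow> (0::real)) (at_right 0)" by (rule tendsto_ident_at)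
    show "((\<lambda>r. n) \<longlongrightarrow> n) (at_right 0)" by simp
    show "\<forall>\<^sub>F x in at_right 0. 0 \<le> (x::real)"
      using eventually_at_right_less[of "0::real"] by (rule eventually_mono) simp
    show "0 < n" using n by simp
  qed
  have "((\<lambda>r. r powr n * Q (t, r, z)) \<longlongrightarrow> 0 * Q (t, 0, z)) (at_right 0)"
    by (rule tendsto_mult[OF p q])
  then show ?thesis by (simp add: A_def w_def)
qed

lemma Inn_Ar: "0 < t \<Longrightarrow> t < T \<Longrightarrow> Inn Ar t z = 0"
  by (rule Inn_FTC_r[OF good_A good_Ar der_A lim_A])

lemma E_Bz: "0 < t \<Longrightarrow> t < T \<Longrightarrow> (LINT z|lborel. Inn Bz t z) = 0"
  by (rule E_FTC_z[OF good_B good_Bz der_B])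

lemma Inn_HEt:
  assumes t: "0 < t" "t < T"
  shows "Inn HEt t z = 2 * (- \<nu> * Inn HD t z + Inn Bz t z)"
proof -
  have "Inn HEt t z = Inn (\<lambda>x. 2 * (- \<nu> * HD x + Ar x + Bz x)) t z"
    unfolding Inn_def by (rule set_lebesgue_integral_cong) (use pointwise t in auto)
  also have "\<dots> = 2 * Inn (\<lambda>x. - \<nu> * HD x + Ar x + Bz x) t z" by (rule Inn_cmult)
  also have "Inn (\<lambda>x. - \<nu> * HD x + Ar x + Bz x) t z = Inn (\<lambda>x. - \<nu> * HD x + Ar x) t z + Inn Bz t z"
    by (rule Inn_add[OF good_add[OF good_cmult[OF good_HD] good_Ar] good_Bz t])
  also have "Inn (\<lambda>x. - \<nu> * HD x + Ar x) t z = Inn (\<lambda>x. - \<nu> * HD x) t z + Inn Ar t z"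
    by (rule Inn_add[OF good_cmult[OF good_HD] good_Ar t])
  also have "Inn (\<lambda>x. - \<nu> * HD x) t z = - \<nu> * Inn HD t z" by (rule Inn_cmult)
  finally show ?thesis using Inn_Ar[OF t] by simp
qed

lemma E_HEt:
  assumes t: "0 < t" "t < T"
  shows "(LINT z|lborel. Inn HEt t z) = 2 * (- \<nu> * (LINT z|lborel. Inn HD t z))"
proof -
  have "(LINT z|lborel. Inn HEt t z) = (LINT z|lborel. 2 * (- \<nu> * Inn HD t z + Inn Bz t z))"
    using Inn_HEt[OF t] by simp
  also have "\<dots> = 2 * (- \<nu> * (LINT z|lborel. Inn HD t z) + (LINT z|lborel. Inn Bz t z))"
    using Inn_int_z[OF good_HD t] Inn_int_z[OF good_Bz t] by (simp add: integral_add)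
  finally show ?thesis using E_Bz[OF t] by simp
qed

lemma wint_HE:
  assumes t: "0 < s" "s < T"
  shows "wint n (\<lambda>r z. (u s r z)\<^sup>2 + (dr \<psi> s r z)\<^sup>2 + (dz \<psi> s r z)\<^sup>2) = (LINT z|lborel. Inn HE s z)"
proof -
  have "(\<lambda>r. ((u s r z)\<^sup>2 + (dr \<psi> s r z)\<^sup>2 + (dz \<psi> s r z)\<^sup>2) * r powr n) = (\<lambda>r. HE (s, r, z))" for z
    using t by (auto simp: HE_def w_def dr_eq[OF smp] dz_eq[OF smp] power2_eq_square mult.commute)
  then show ?thesis unfolding wint_def Inn_def by simp
qed

lemma wint_HD:
  assumes t: "0 < t" "t < T"
  shows "wint n (\<lambda>r z. (dr u t r z)\<^sup>2 + (dz u t r z)\<^sup>2 + (lapn n \<psi> t r z)\<^sup>2) = (LINT z|lborel. Inn HD t z)"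
proof -
  have "(LINT r:{0<..}|lborel. ((dr u t r z)\<^sup>2 + (dz u t r z)\<^sup>2 + (lapn n \<psi> t r z)\<^sup>2) * r powr n)
      = Inn HD t z" for z
    unfolding Inn_def
  proof (rule set_lebesgue_integral_cong)
    show "\<forall>r. r \<in> {0<..} \<longrightarrow> ((dr u t r z)\<^sup>2 + (dz u t r z)\<^sup>2 + (lapn n \<psi> t r z)\<^sup>2) * r powr n = HD (t, r, z)"
    proof (intro allI impI)
      fix r :: real assume "r \<in> {0<..}"
      then have r: "0 < r" by simp
      have "(lapn n \<psi> t r z)\<^sup>2 = (\<omega> t r z)\<^sup>2" using eq_p[OF t r, of z] by (metis power2_minus)
      then show "((dr u t r z)\<^sup>2 + (dz u t r z)\<^sup>2 + (lapn n \<psi> t r z)\<^sup>2) * r powr n = HD (t, r, z)"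
        using t by (simp add: HD_def w_def dr_eq[OF smu] dz_eq[OF smu] power2_eq_square mult.commute)
    qed
  qed simp
  then show ?thesis unfolding wint_def by simp
qed

lemma HD_nonneg: "0 < t \<Longrightarrow> t < T \<Longrightarrow> 0 \<le> Inn HD t z"
  unfolding Inn_def' by (intro integral_nonneg_AE AE_I2) (auto simp: HD_def w_def indicator_def)

lemma main_deriv:
  assumes t: "0 < t" "t < T"
  shows "((\<lambda>s. (1/2) * wint n (\<lambda>r z. (u s r z)\<^sup>2 + (dr \<psi> s r z)\<^sup>2 + (dz \<psi> s r z)\<^sup>2))
              has_real_derivative
              (- \<nu> * wint n (\<lambda>r z. (dr u t r z)\<^sup>2 + (dz u t r z)\<^sup>2 + (lapn n \<psi> t r z)\<^sup>2)))
           (at t)"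
proof -
  have d: "((\<lambda>s. (1/2) * (LINT z|lborel. Inn HE s z)) has_real_derivative (1/2) * (LINT z|lborel. Inn HEt t z)) (at t)"
    by (intro DERIV_cmult E_deriv_t[OF good_HE good_HEt der_HE t])
  have "(1/2) * (LINT z|lborel. Inn HEt t z) = - \<nu> * wint n (\<lambda>r z. (dr u t r z)\<^sup>2 + (dz u t r z)\<^sup>2 + (lapn n \<psi> t r z)\<^sup>2)"
    using E_HEt[OF t] wint_HD[OF t] by simp
  with d have d': "((\<lambda>s. (1/2) * (LINT z|lborel. Inn HE s z)) has_real_derivative
      - \<nu> * wint n (\<lambda>r z. (dr u t r z)\<^sup>2 + (dz u t r z)\<^sup>2 + (lapn n \<psi> t r z)\<^sup>2)) (at t)" by simp
  show ?thesis
    by (rule has_field_derivative_transform_within_open[OF d', where S="{0<..<T}"])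
       (use t wint_HE in auto)
qed

end

theorem mainTheorem1:
  fixes n \<nu> T :: real
    and u \<omega> \<psi> :: "real \<Rightarrow> real \<Rightarrow> real \<Rightarrow> real"
  assumes n: "n \<ge> 2" and nu: "\<nu> \<ge> 0" and T: "T > 0"
    and smooth: "smooth_on ({0<..<T} \<times> UNIV \<times> UNIV) (unc u)"
                "smooth_on ({0<..<T} \<times> UNIV \<times> UNIV) (unc \<omega>)"
                "smooth_on ({0<..<T} \<times> UNIV \<times> UNIV) (unc \<psi>)"
    and even: "\<And>t r z. u t (-r) z = u t r z"
              "\<And>t r z. \<omega> t (-r) z = \<omega> t r z"
              "\<And>t r z. \<psi> t (-r) z = \<psi> t r z"
    and decay: "rapid_decay {0<..<T} u" "rapid_decay {0<..<T} \<omega>" "rapid_decay {0<..<T} \<psi>"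
    and eq_u: "\<And>t r z. 0 < t \<Longrightarrow> t < T \<Longrightarrow> 0 < r \<Longrightarrow>
        dt u t r z + (- r * dz \<psi> t r z) * dr u t r z
          + ((n - 1) * \<psi> t r z + r * dr \<psi> t r z) * dz u t r z
        = 2 * u t r z * dz \<psi> t r z + \<nu> * lapn n u t r z"
    and eq_\<omega>: "\<And>t r z. 0 < t \<Longrightarrow> t < T \<Longrightarrow> 0 < r \<Longrightarrow>
        dt \<omega> t r z + (- r * dz \<psi> t r z) * dr \<omega> t r z
          + ((n - 1) * \<psi> t r z + r * dr \<psi> t r z) * dz \<omega> t r z
        = dz (\<lambda>t r z. (u t r z)\<^sup>2) t r z - (n - 3) * dz \<psi> t r z * \<omega> t r z
          + \<nu> * lapn n \<omega> t r z"
    and eq_\<psi>: "\<And>t r z. 0 < t \<Longrightarrow> t < T \<Longrightarrow> 0 < r \<Longrightarrow>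
        - lapn n \<psi> t r z = \<omega> t r z"
  shows "(\<forall>t\<in>{0<..<T}.
           ((\<lambda>s. (1/2) * wint n (\<lambda>r z. (u s r z)\<^sup>2 + (dr \<psi> s r z)\<^sup>2 + (dz \<psi> s r z)\<^sup>2))
              has_real_derivative
              (- \<nu> * wint n (\<lambda>r z. (dr u t r z)\<^sup>2 + (dz u t r z)\<^sup>2 + (lapn n \<psi> t r z)\<^sup>2)))
           (at t))
       \<and> (\<nu> = 0 \<longrightarrow> (\<forall>s\<in>{0<..<T}. \<forall>t\<in>{0<..<T}.
             wint n (\<lambda>r z. (u s r z)\<^sup>2 + (dr \<psi> s r z)\<^sup>2 + (dz \<psi> s r z)\<^sup>2)
           = wint n (\<lambda>r z. (u t r z)\<^sup>2 + (dr \<psi> t r z)\<^sup>2 + (dz \<psi> t r z)\<^sup>2)))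
       \<and> (\<nu> > 0 \<longrightarrow> (\<forall>s\<in>{0<..<T}. \<forall>t\<in>{0<..<T}. s \<le> t \<longrightarrow>
             wint n (\<lambda>r z. (u t r z)\<^sup>2 + (dr \<psi> t r z)\<^sup>2 + (dz \<psi> t r z)\<^sup>2)
           \<le> wint n (\<lambda>r z. (u s r z)\<^sup>2 + (dr \<psi> s r z)\<^sup>2 + (dz \<psi> s r z)\<^sup>2)))"
  proof -
  interpret setting n \<nu> T u \<omega> \<psi>
    by unfold_locales (unfold SS_def, (fact n nu T smooth decay eq_u eq_\<omega> eq_\<psi>)+)
  define E where "E s = wint n (\<lambda>r z. (u s r z)\<^sup>2 + (dr \<psi> s r z)\<^sup>2 + (dz \<psi> s r z)\<^sup>2)" for s
  define DD where "DD t = wint n (\<lambda>r z. (dr u t r z)\<^sup>2 + (dz u t r z)\<^sup>2 + (lapn n \<psi> t r z)\<^sup>2)" for t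
  have der: "((\<lambda>s. (1/2) * E s) has_real_derivative (- \<nu> * DD t)) (at t)" if "t \<in> {0<..<T}" for t
    using main_deriv[of t] that unfolding E_def DD_def by simp
  have DD0: "0 \<le> DD t" if "t \<in> {0<..<T}" for t
    using that unfolding DD_def by (simp add: wint_HD HD_nonneg integral_nonneg_AE)
  have P1: "\<forall>t\<in>{0<..<T}.
           ((\<lambda>s. (1/2) * wint n (\<lambda>r z. (u s r z)\<^sup>2 + (dr \<psi> s r z)\<^sup>2 + (dz \<psi> s r z)\<^sup>2))
              has_real_derivative
              (- \<nu> * wint n (\<lambda>r z. (dr u t r z)\<^sup>2 + (dz u t r z)\<^sup>2 + (lapn n \<psi> t r z)\<^sup>2)))
           (at t)"
    using main_deriv by auto
  have P2: "\<forall>s\<in>{0<..<T}. \<forall>t\<in>{0<..<T}. E s = E t" if "\<nu> = 0"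
  proof -
    have "\<exists>c. \<forall>x\<in>{0<..<T}. (1/2) * E x = c"
    proof (rule has_field_derivative_zero_constant)
      show "convex {0<..<T}" by simp
      show "((\<lambda>s. (1/2) * E s) has_field_derivative 0) (at x within {0<..<T})" if "x \<in> {0<..<T}" for x
        using der[OF that] \<open>\<nu> = 0\<close> by (simp add: has_field_derivative_at_within)
    qed
    then obtain c where "\<forall>x\<in>{0<..<T}. (1/2) * E x = c" by blast
    then show ?thesis by auto
  qed
  have P3: "\<forall>s\<in>{0<..<T}. \<forall>t\<in>{0<..<T}. s \<le> t \<longrightarrow> E t \<le> E s" if "\<nu> > 0"
  proof (intro ballI impI)
    fix s t assume s: "s \<in> {0<..<T}" and t: "t \<in> {0<..<T}" and st: "s \<le> t"
    have "(1/2) * E t \<le> (1/2) * E s"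
    proof (rule DERIV_nonpos_imp_nonincreasing[OF st])
      fix x assume "s \<le> x" "x \<le> t"
      then have x: "x \<in> {0<..<T}" using s t by auto
      show "\<exists>y. ((\<lambda>s. (1/2) * E s) has_real_derivative y) (at x) \<and> y \<le> 0"
        using der[OF x] DD0[OF x] \<open>\<nu> > 0\<close> by (intro exI[of _ "- \<nu> * DD x"]) simp
    qed
    then show "E t \<le> E s" by simp
  qed
  show ?thesis using P1 P2 P3 unfolding E_def by blast
qed

end
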